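(* Let $\{D_1,D_2,D_3\}$ be a positively oriented orthonormal basis of $\mathbb{R}^3$ and $J$ a symmetric positive definite linear map on $\mathbb{R}^3$ having $D_3$ as an eigenvector. For a smooth curve $\Lambda:[0,T]\to SO(3)$ the following are equivalent: (i) (Lagrange–d'Alembert) $w\cdot d_3=0$ on $[0,T]$ and there is a continuous $\mu:[0,T]\to\mathbb{R}$ such that $$\frac{d}{d\iota}\Big|_{\iota=0}\int_0^T K(\Lambda_\iota,\dot\Lambda_\iota)\,dt+\int_0^T\mu\,\delta\theta\cdot d_3\,dt=0$$ for every smooth $\delta\theta:[0,T]\to\mathbb{R}^3$ with $\delta\theta(0)=\delta\theta(T)=0$, where $\Lambda_\iota=\exp[\iota\widehat{\delta\theta}]\Lambda$; (ii) there is $\mu:[0,T]\to\mathbb{R}$ such that for all $t$ $$\nabla_{\dot d_3}\pi_\perp+\pi_\parallel\dot d_3=0,\qquad \dot\pi_\parallel+\pi_\perp\cdot\dot d_3+\mu=0,\qquad w\cdot d_3=0 .$$ Moreover, for any $\Lambda$ and $\mu$, the system in (ii) is equivalent to $$\nabla_{\dot d_3}\pi_\perp=0,\qquad \pi_\perp\cdot\dot d_3+\mu=0,\qquad w_\parallel=0,$$ i.e. $\pi_\perp$ is parallel transported along the curve $d_3$ on the unit sphere.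
   Context: Notation: $d_i=\Lambda D_i$; for $v\in\mathbb{R}^3$, $\hat v a=v\times a$; the spatial angular velocity $w$ and convected angular velocity $W$ are defined by $\dot\Lambda=\hat w\Lambda=\Lambda\hat W$, and $w_\parallel=w\cdot d_3$. The kinetic energy is $K=\tfrac12 W\cdot JW=\tfrac12 w\cdot jw$ with $j=\Lambda J\Lambda^T$. The spatial angular momentum is $\pi=jw$, split as $\pi=\pi_\perp+\pi_\parallel d_3$ with $\pi_\parallel=\pi\cdot d_3$, $\pi_\perp=(I-d_3\otimes d_3)\pi$. For a curve $v(t)$ with $v(t)\cdot d_3(t)=0$, $\nabla_{\dot d_3}v:=(I-d_3\otimes d_3)\dot v$ is the covariant derivative on the unit sphere along $d_3$. The constraint $w\cdot d_3=0$ is the non-twisting condition and $\mu$ the associated multiplier. *)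

theory Defs
  imports "HOL-Analysis.Analysis"
begin

type_synonym vec3 = "real^3"
type_synonym mat3 = "real^3^3"

definition hat :: "vec3 \<Rightarrow> mat3" where
  "hat v = matrix (\<lambda>a. cross3 v a)"

text \<open>inverse of hat on skew-symmetric matrices\<close>
definition vee :: "mat3 \<Rightarrow> vec3" where
  "vee A = vector [A$3$2, A$1$3, A$2$1]"

definition SO3 :: "mat3 set" where
  "SO3 = {L. transpose L ** L = mat 1 \<and> det L = 1}"

primrec mpow :: "mat3 \<Rightarrow> nat \<Rightarrow> mat3" where
  "mpow A 0 = mat 1"
| "mpow A (Suc n) = A ** mpow A n"

definition mexp :: "mat3 \<Rightarrow> mat3" where
  "mexp A = (\<Sum>n. (1 / fact n) *\<^sub>R mpow A n)"

primrec nth_vderiv :: "nat \<Rightarrow> real set \<Rightarrow> (real \<Rightarrow> 'a::real_normed_vector) \<Rightarrow> real \<Rightarrow> 'a" where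
  "nth_vderiv 0 S f = f"
| "nth_vderiv (Suc n) S f = (\<lambda>t. vector_derivative (nth_vderiv n S f) (at t within S))"

definition smooth_on :: "real set \<Rightarrow> (real \<Rightarrow> 'a::real_normed_vector) \<Rightarrow> bool" where
  "smooth_on S f \<longleftrightarrow> (\<forall>n. \<forall>t\<in>S.
     (nth_vderiv n S f has_vector_derivative nth_vderiv (Suc n) S f t) (at t within S))"

definition tder :: "real \<Rightarrow> (real \<Rightarrow> 'a::real_normed_vector) \<Rightarrow> real \<Rightarrow> 'a" where
  "tder T f t = vector_derivative f (at t within {0..T})"

definition kin :: "mat3 \<Rightarrow> mat3 \<Rightarrow> mat3 \<Rightarrow> real" where
  "kin J L Ld = (let W = vee (transpose L ** Ld) in (1/2) * (W \<bullet> (J *v W)))"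

definition d3 :: "vec3 \<Rightarrow> (real \<Rightarrow> mat3) \<Rightarrow> real \<Rightarrow> vec3" where
  "d3 D3 \<Lambda> t = \<Lambda> t *v D3"

definition angvel :: "real \<Rightarrow> (real \<Rightarrow> mat3) \<Rightarrow> real \<Rightarrow> vec3" where
  "angvel T \<Lambda> t = vee (tder T \<Lambda> t ** transpose (\<Lambda> t))"

definition angmom :: "mat3 \<Rightarrow> real \<Rightarrow> (real \<Rightarrow> mat3) \<Rightarrow> real \<Rightarrow> vec3" where
  "angmom J T \<Lambda> t = (\<Lambda> t ** J ** transpose (\<Lambda> t)) *v angvel T \<Lambda> t"

definition pi_par :: "mat3 \<Rightarrow> vec3 \<Rightarrow> real \<Rightarrow> (real \<Rightarrow> mat3) \<Rightarrow> real \<Rightarrow> real" where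
  "pi_par J D3 T \<Lambda> t = angmom J T \<Lambda> t \<bullet> d3 D3 \<Lambda> t"

definition pi_perp :: "mat3 \<Rightarrow> vec3 \<Rightarrow> real \<Rightarrow> (real \<Rightarrow> mat3) \<Rightarrow> real \<Rightarrow> vec3" where
  "pi_perp J D3 T \<Lambda> t = angmom J T \<Lambda> t - pi_par J D3 T \<Lambda> t *\<^sub>R d3 D3 \<Lambda> t"

text \<open>covariant derivative along d3: (I - d3 (x) d3) v dot\<close>
definition covd :: "vec3 \<Rightarrow> real \<Rightarrow> (real \<Rightarrow> mat3) \<Rightarrow> (real \<Rightarrow> vec3) \<Rightarrow> real \<Rightarrow> vec3" where
  "covd D3 T \<Lambda> v t = tder T v t - (tder T v t \<bullet> d3 D3 \<Lambda> t) *\<^sub>R d3 D3 \<Lambda> t"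

definition varied :: "(real \<Rightarrow> mat3) \<Rightarrow> (real \<Rightarrow> vec3) \<Rightarrow> real \<Rightarrow> real \<Rightarrow> mat3" where
  "varied \<Lambda> \<delta>\<theta> \<iota> t = mexp (\<iota> *\<^sub>R hat (\<delta>\<theta> t)) ** \<Lambda> t"

definition action :: "mat3 \<Rightarrow> real \<Rightarrow> (real \<Rightarrow> mat3) \<Rightarrow> (real \<Rightarrow> vec3) \<Rightarrow> real \<Rightarrow> real" where
  "action J T \<Lambda> \<delta>\<theta> \<iota> =
     integral {0..T} (\<lambda>t. kin J (varied \<Lambda> \<delta>\<theta> \<iota> t) (tder T (varied \<Lambda> \<delta>\<theta> \<iota>) t))"

end

theory Submission
  imports Defs
begin

lemma mm_add_r: "((A::real^'n^'m) + B) ** C = A ** C + B ** C"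
  by (simp add: matrix_matrix_mult_def vec_eq_iff sum.distrib distrib_right)
lemma mm_scale_l: "((k::real) *\<^sub>R (A::real^'n^'m)) ** B = k *\<^sub>R (A ** B)"
  by (simp add: scalar_matrix_assoc)
lemma mm_scale_r: "(A::real^'n^'m) ** ((k::real) *\<^sub>R B) = k *\<^sub>R (A ** B)"
  by (simp add: matrix_matrix_mult_def sum_distrib_left mult_ac vec_eq_iff scaleR_sum_right)
lemma mm_zero_l[simp]: "(0::real^'n^'m) ** B = 0"
  by (simp add: matrix_matrix_mult_def vec_eq_iff)
lemma mm_zero_r[simp]: "(A::real^'n^'m) ** (0::real^'p^'n) = 0"
  by (simp add: matrix_matrix_mult_def vec_eq_iff)
lemma mm_diff_l: "((A::real^'n^'m) - B) ** C = A ** C - B ** C"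
  by (simp add: matrix_matrix_mult_def vec_eq_iff sum_subtractf left_diff_distrib)
lemma mm_diff_r: "(A::real^'n^'m) ** (B - C) = A ** B - A ** C"
  by (simp add: matrix_matrix_mult_def vec_eq_iff sum_subtractf right_diff_distrib)
lemma mm_neg_l: "(- (A::real^'n^'m)) ** C = - (A ** C)"
  by (simp add: matrix_matrix_mult_def vec_eq_iff sum_negf)
lemma mm_neg_r: "(A::real^'n^'m) ** (- C) = - (A ** C)"
  by (simp add: matrix_matrix_mult_def vec_eq_iff sum_negf)
lemma mv_scale_l: "((k::real) *\<^sub>R (A::real^'n^'m)) *v x = k *\<^sub>R (A *v x)"
  by (simp add: matrix_vector_mult_def vec_eq_iff sum_distrib_left mult_ac)
lemma transpose_add: "transpose ((A::real^'n^'m) + B) = transpose A + transpose B"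
  by (simp add: transpose_def vec_eq_iff)
lemma transpose_neg: "transpose (- (A::real^'n^'m)) = - transpose A"
  by (simp add: transpose_def vec_eq_iff)
lemma transpose_zero[simp]: "transpose (0::real^'n^'m) = 0"
  by (simp add: transpose_def vec_eq_iff)

lemma bb_mm: "bounded_bilinear (\<lambda>(A::real^'n^'m) (B::real^'p^'n). A ** B)"
  unfolding bilinear_conv_bounded_bilinear[symmetric] bilinear_def
  by (auto intro!: linearI simp: matrix_add_ldistrib mm_add_r mm_scale_l mm_scale_r)

lemma bb_mv: "bounded_bilinear (\<lambda>(A::real^'n^'m) (x::real^'n). A *v x)"
  unfolding bilinear_conv_bounded_bilinear[symmetric] bilinear_def
  by (auto intro!: linearI simp: matrix_vector_right_distrib matrix_vector_mult_add_rdistrib mv_scale_l matrix_vector_mult_scaleR)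

lemma bl_transpose: "bounded_linear (transpose :: real^'n^'m \<Rightarrow> real^'m^'n)"
  unfolding linear_conv_bounded_linear[symmetric]
  by (auto intro!: linearI simp: transpose_def vec_eq_iff)

lemma bl_vee: "bounded_linear vee"
  unfolding linear_conv_bounded_linear[symmetric]
  by (auto intro!: linearI simp: vee_def vec_eq_iff forall_3)


lemma hat_mv: "hat v *v x = cross3 v x"
  using bilinear_cross unfolding hat_def bilinear_def by (simp add: matrix_works)

lemma hat_comp[simp]:
  "hat v $1$1 = 0" "hat v $1$2 = - v$3" "hat v $1$3 = v$2"
  "hat v $2$1 = v$3" "hat v $2$2 = 0" "hat v $2$3 = - v$1"
  "hat v $3$1 = - v$2" "hat v $3$2 = v$1" "hat v $3$3 = 0"
  unfolding hat_def matrix_def by (simp_all add: cross_components axis_def)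

lemma bl_hat: "bounded_linear hat"
  unfolding linear_conv_bounded_linear[symmetric]
  by (rule linearI) (simp_all add: vec_eq_iff forall_3)

lemma vee_hat[simp]: "vee (hat v) = v"
  by (simp add: vee_def vec_eq_iff forall_3)

lemma transpose_hat: "transpose (hat v) = - hat v"
  by (simp add: transpose_def vec_eq_iff forall_3)

lemma hat_vee_skew:
  assumes h: "transpose (Y::real^3^3) = - Y"
  shows "hat (vee Y) = Y"
proof -
  have e: "Y$j$i = - Y$i$j" for i j
  proof -
    have "transpose Y $ i $ j = (- Y) $ i $ j" using h by simp
    then show ?thesis by (simp add: transpose_def)
  qed
  have d: "Y$i$i = 0" for i using e[of i i] by simp
  show ?thesis
    unfolding vec_eq_iff forall_3
    using d[of 1] d[of 2] d[of 3] e[of 1 2] e[of 1 3] e[of 2 3]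
    by (simp add: vee_def)
qed


definition Dk :: "nat \<Rightarrow> real set \<Rightarrow> (real \<Rightarrow> 'a::real_normed_vector) \<Rightarrow> bool" where
  "Dk k S f \<longleftrightarrow> (\<forall>n<k. \<forall>t\<in>S. (nth_vderiv n S f has_vector_derivative nth_vderiv (Suc n) S f t) (at t within S))"

lemma smooth_Dk: "smooth_on S f \<longleftrightarrow> (\<forall>k. Dk k S f)"
  unfolding smooth_on_def Dk_def by blast

lemma nth_vderiv_Suc': "nth_vderiv (Suc n) S f = nth_vderiv n S (nth_vderiv 1 S f)"
  by (induction n) auto

lemma vd_cong:
  assumes t: "t \<in> S" and fg: "\<And>x. x \<in> S \<Longrightarrow> f x = g x"
  shows "vector_derivative f (at t within S) = vector_derivative g (at t within S)"
proof -
  have "(f has_vector_derivative v) (at t within S) \<longleftrightarrow> (g has_vector_derivative v) (at t within S)" for v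
  proof
    assume "(f has_vector_derivative v) (at t within S)"
    then show "(g has_vector_derivative v) (at t within S)"
      by (rule has_vector_derivative_transform[OF t, rotated]) (simp add: fg)
  next
    assume "(g has_vector_derivative v) (at t within S)"
    then show "(f has_vector_derivative v) (at t within S)"
      by (rule has_vector_derivative_transform[OF t, rotated]) (simp add: fg)
  qed
  then show ?thesis unfolding vector_derivative_def by simp
qed

lemma nth_vderiv_cong:
  "(\<And>x. x \<in> S \<Longrightarrow> f x = g x) \<Longrightarrow> t \<in> S \<Longrightarrow> nth_vderiv n S f t = nth_vderiv n S g t"
proof (induction n arbitrary: t)
  case 0 then show ?case by simp
next
  case (Suc n)
  have "\<And>x. x \<in> S \<Longrightarrow> nth_vderiv n S f x = nth_vderiv n S g x" using Suc by blast
  then show ?case by (simp only: nth_vderiv.simps) (rule vd_cong[OF Suc.prems(2)])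
qed

lemma Dk_cong:
  assumes fg: "\<And>x. x \<in> S \<Longrightarrow> f x = g x" and k: "Dk k S f"
  shows "Dk k S g"
  unfolding Dk_def
proof (intro allI impI ballI)
  fix n t assume "n < k" and t: "t \<in> S"
  then have "(nth_vderiv n S f has_vector_derivative nth_vderiv (Suc n) S f t) (at t within S)"
    using k unfolding Dk_def by blast
  moreover have "nth_vderiv (Suc n) S f t = nth_vderiv (Suc n) S g t"
    by (rule nth_vderiv_cong[OF fg t])
  ultimately have "(nth_vderiv n S f has_vector_derivative nth_vderiv (Suc n) S g t) (at t within S)"
    by simp
  then show "(nth_vderiv n S g has_vector_derivative nth_vderiv (Suc n) S g t) (at t within S)"
    by (rule has_vector_derivative_transform[OF t, rotated]) (rule nth_vderiv_cong[OF fg, symmetric])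
qed

lemma nth_vderiv_Suc'': "nth_vderiv n S (nth_vderiv 1 S f) = nth_vderiv (Suc n) S f"
  by (simp only: nth_vderiv_Suc')

lemma Dk_Suc:
  "Dk (Suc k) S f \<longleftrightarrow> (\<forall>t\<in>S. (f has_vector_derivative nth_vderiv 1 S f t) (at t within S)) \<and> Dk k S (nth_vderiv 1 S f)"
  unfolding Dk_def All_less_Suc2 One_nat_def
  by (simp only: nth_vderiv_Suc''[unfolded One_nat_def] nth_vderiv.simps(1))

lemma nth_vderiv_1: "nth_vderiv (Suc 0) S f t = vector_derivative f (at t within S)"
  by simp

declare nth_vderiv.simps(2)[simp del]

lemma Dk_mono: "Dk (Suc k) S f \<Longrightarrow> Dk k S f"
  unfolding Dk_def by auto

lemma Dk_0[simp]: "Dk 0 S f"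
  unfolding Dk_def by auto

locale ivl =
  fixes a b :: real
  assumes ab: "a < b"
begin

lemma vd_eq: "t \<in> {a..b} \<Longrightarrow> (f has_vector_derivative f') (at t within {a..b}) \<Longrightarrow> nth_vderiv 1 {a..b} f t = f'"
  using vector_derivative_within_cbox[of a b t f f'] ab by (simp add: nth_vderiv_1)

lemma Dk_const: "Dk k {a..b} (\<lambda>t. c)"
proof (induction k arbitrary: c)
  case 0 then show ?case by simp
next
  case (Suc k)
  have d: "((\<lambda>t. c) has_vector_derivative 0) (at t within {a..b})" for t
    by (rule derivative_eq_intros) auto
  show ?case unfolding Dk_Suc
    using d vd_eq[OF _ d] Suc.IH Dk_cong[of "{a..b}" "\<lambda>t. 0" "nth_vderiv 1 {a..b} (\<lambda>t. c)"] by auto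
qed

lemma Dk_add: "Dk k {a..b} f \<Longrightarrow> Dk k {a..b} g \<Longrightarrow> Dk k {a..b} (\<lambda>t. f t + g t)"
proof (induction k arbitrary: f g)
  case 0 then show ?case by simp
next
  case (Suc k)
  let ?f1 = "nth_vderiv 1 {a..b} f" and ?g1 = "nth_vderiv 1 {a..b} g"
  have df: "\<forall>t\<in>{a..b}. (f has_vector_derivative ?f1 t) (at t within {a..b})" and kf: "Dk k {a..b} ?f1"
    using Suc.prems(1) unfolding Dk_Suc by auto
  have dg: "\<forall>t\<in>{a..b}. (g has_vector_derivative ?g1 t) (at t within {a..b})" and kg: "Dk k {a..b} ?g1"
    using Suc.prems(2) unfolding Dk_Suc by auto
  have d: "\<forall>t\<in>{a..b}. ((\<lambda>t. f t + g t) has_vector_derivative ?f1 t + ?g1 t) (at t within {a..b})" (is "\<forall>t\<in>_. (?h has_vector_derivative ?h1 t) _")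
    using df dg by (auto intro!: derivative_eq_intros)
  have "Dk k {a..b} (\<lambda>t. ?f1 t + ?g1 t)" using Suc.IH kf kg by blast
  then have "Dk k {a..b} (nth_vderiv 1 {a..b} (\<lambda>t. f t + g t))"
    by (rule Dk_cong[rotated]) (use vd_eq[OF _ d[rule_format]] in \<open>simp\<close>)
  moreover have "\<forall>t\<in>{a..b}. nth_vderiv 1 {a..b} ?h t = ?h1 t" using vd_eq d by blast
  ultimately show ?case unfolding Dk_Suc using d by simp
qed

lemma Dk_linear: "bounded_linear L \<Longrightarrow> Dk k {a..b} f \<Longrightarrow> Dk k {a..b} (\<lambda>t. L (f t))"
proof (induction k arbitrary: f)
  case 0 then show ?case by simp
next
  case (Suc k)
  let ?f1 = "nth_vderiv 1 {a..b} f"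
  have df: "\<forall>t\<in>{a..b}. (f has_vector_derivative ?f1 t) (at t within {a..b})" and kf: "Dk k {a..b} ?f1"
    using Suc.prems(2) unfolding Dk_Suc by auto
  have d: "\<forall>t\<in>{a..b}. ((\<lambda>t. L (f t)) has_vector_derivative L (?f1 t)) (at t within {a..b})" (is "\<forall>t\<in>_. (?h has_vector_derivative ?h1 t) _")
    using df bounded_linear.has_vector_derivative[OF Suc.prems(1)] by blast
  have "Dk k {a..b} (\<lambda>t. L (?f1 t))" using Suc.IH kf Suc.prems(1) by blast
  then have "Dk k {a..b} (nth_vderiv 1 {a..b} (\<lambda>t. L (f t)))"
    by (rule Dk_cong[rotated]) (use vd_eq[OF _ d[rule_format]] in \<open>simp\<close>)
  moreover have "\<forall>t\<in>{a..b}. nth_vderiv 1 {a..b} ?h t = ?h1 t" using vd_eq d by blast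
  ultimately show ?case unfolding Dk_Suc using d by simp
qed

lemma Dk_bilinear: "bounded_bilinear B \<Longrightarrow> Dk k {a..b} f \<Longrightarrow> Dk k {a..b} g \<Longrightarrow> Dk k {a..b} (\<lambda>t. B (f t) (g t))"
proof (induction k arbitrary: f g)
  case 0 then show ?case by simp
next
  case (Suc k)
  let ?f1 = "nth_vderiv 1 {a..b} f" and ?g1 = "nth_vderiv 1 {a..b} g"
  have df: "\<forall>t\<in>{a..b}. (f has_vector_derivative ?f1 t) (at t within {a..b})" and kf: "Dk k {a..b} ?f1"
    using Suc.prems(2) unfolding Dk_Suc by auto
  have dg: "\<forall>t\<in>{a..b}. (g has_vector_derivative ?g1 t) (at t within {a..b})" and kg: "Dk k {a..b} ?g1"
    using Suc.prems(3) unfolding Dk_Suc by auto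
  have d: "\<forall>t\<in>{a..b}. ((\<lambda>t. B (f t) (g t)) has_vector_derivative B (f t) (?g1 t) + B (?f1 t) (g t)) (at t within {a..b})" (is "\<forall>t\<in>_. (?h has_vector_derivative ?h1 t) _")
    using df dg bounded_bilinear.has_vector_derivative[OF Suc.prems(1)] by blast
  have "Dk k {a..b} (\<lambda>t. B (f t) (?g1 t))" using Suc.IH Dk_mono Suc.prems kg by blast
  moreover have "Dk k {a..b} (\<lambda>t. B (?f1 t) (g t))" using Suc.IH Dk_mono Suc.prems kf by blast
  ultimately have "Dk k {a..b} (\<lambda>t. B (f t) (?g1 t) + B (?f1 t) (g t))" by (rule Dk_add)
  then have "Dk k {a..b} (nth_vderiv 1 {a..b} (\<lambda>t. B (f t) (g t)))"
    by (rule Dk_cong[rotated]) (use vd_eq[OF _ d[rule_format]] in \<open>simp\<close>)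
  moreover have "\<forall>t\<in>{a..b}. nth_vderiv 1 {a..b} ?h t = ?h1 t" using vd_eq d by blast
  ultimately show ?case unfolding Dk_Suc using d by simp
qed

lemma Dk_id: "Dk k {a..b} (\<lambda>t. t)"
proof (cases k)
  case 0 then show ?thesis by simp
next
  case (Suc k)
  have d: "((\<lambda>t. t) has_vector_derivative 1) (at t within {a..b})" for t
    by (rule derivative_eq_intros) auto
  have "Dk k {a..b} (nth_vderiv 1 {a..b} (\<lambda>t. t))"
    by (rule Dk_cong[rotated, OF Dk_const[of k 1]]) (use vd_eq[OF _ d] in \<open>simp\<close>)
  then show ?thesis unfolding Suc Dk_Suc using d vd_eq[OF _ d] by simp
qed

lemma smooth_const: "smooth_on {a..b} (\<lambda>t. c)" by (simp add: smooth_Dk Dk_const)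
lemma smooth_id: "smooth_on {a..b} (\<lambda>t. t)" by (simp add: smooth_Dk Dk_id)
lemma smooth_add: "smooth_on {a..b} f \<Longrightarrow> smooth_on {a..b} g \<Longrightarrow> smooth_on {a..b} (\<lambda>t. f t + g t)"
  by (simp add: smooth_Dk Dk_add)
lemma smooth_linear: "bounded_linear L \<Longrightarrow> smooth_on {a..b} f \<Longrightarrow> smooth_on {a..b} (\<lambda>t. L (f t))"
  by (simp add: smooth_Dk Dk_linear)
lemma smooth_bilinear: "bounded_bilinear B \<Longrightarrow> smooth_on {a..b} f \<Longrightarrow> smooth_on {a..b} g \<Longrightarrow> smooth_on {a..b} (\<lambda>t. B (f t) (g t))"
  by (simp add: smooth_Dk Dk_bilinear)
lemma smooth_deriv: "smooth_on {a..b} f \<Longrightarrow> smooth_on {a..b} (nth_vderiv 1 {a..b} f)"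
  by (metis smooth_Dk Dk_Suc)
lemma smooth_has_deriv: "smooth_on {a..b} f \<Longrightarrow> t \<in> {a..b} \<Longrightarrow> (f has_vector_derivative nth_vderiv 1 {a..b} f t) (at t within {a..b})"
  by (metis smooth_Dk Dk_Suc)
lemma smooth_cont: "smooth_on {a..b} f \<Longrightarrow> continuous_on {a..b} f"
  using smooth_has_deriv
  by (meson continuous_on_eq_continuous_within has_vector_derivative_continuous)

end


lemma exp_summable: "summable (\<lambda>n. (x::real)^n / fact n)"
  using summable_exp[of x] by (simp add: divide_inverse mult.commute)

lemma exp_suminf: "(\<Sum>n. (x::real)^n / fact n) = exp x"
  using exp_converges[of x] by (simp add: sums_iff divide_inverse mult.commute)

lemma exp_tail_le:
  assumes "(q::real) \<ge> 0"
  shows "summable (\<lambda>n. q^(n+2) / fact (n+2))" "(\<Sum>n. q^(n+2) / fact (n+2)) \<le> exp q"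
proof -
  show "summable (\<lambda>n. q^(n+2) / fact (n+2))"
    using summable_ignore_initial_segment[OF exp_summable[of q], of 2] .
  have "(\<Sum>n. q^(n+2) / fact (n+2)) = exp q - (\<Sum>i<2. q^i / fact i)"
    using suminf_minus_initial_segment[OF exp_summable[of q], of 2] exp_suminf by simp
  also have "\<dots> \<le> exp q" using assms by (simp add: numeral_2_eq_2)
  finally show "(\<Sum>n. q^(n+2) / fact (n+2)) \<le> exp q" .
qed

lemma ser_bound:
  fixes X :: "nat \<Rightarrow> 'a::banach"
  assumes Xb: "\<And>n. norm (X n) \<le> B * q^n" and q: "q \<ge> 0" and s: "\<bar>s\<bar> \<le> 1"
  shows "summable (\<lambda>n. (s^n / fact n) *\<^sub>R X n)"
    and "norm ((\<Sum>n. (s^n / fact n) *\<^sub>R X n) - X 0 - s *\<^sub>R X 1) \<le> s\<^sup>2 * (B * exp q)"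
proof -
  have "norm (X 0) \<le> B" using Xb[of 0] by simp
  then have B: "B \<ge> 0" using norm_ge_zero[of "X 0"] by linarith
  have tb: "norm ((s^n / fact n) *\<^sub>R X n) \<le> B * (q^n / fact n)" for n
  proof -
    have "norm ((s^n / fact n) *\<^sub>R X n) = (\<bar>s\<bar>^n / fact n) * norm (X n)"
      by (simp add: power_abs abs_mult)
    also have "\<dots> \<le> (1 / fact n) * (B * q^n)"
      using Xb[of n] s by (intro divide_right_mono mult_mono) (auto simp: power_le_one)
    finally show ?thesis by simp
  qed
  show sm: "summable (\<lambda>n. (s^n / fact n) *\<^sub>R X n)"
    by (rule summable_comparison_test[OF _ summable_mult[OF exp_summable[of q], of B]]) (use tb in auto)
  let ?f = "\<lambda>n. (s^n / fact n) *\<^sub>R X n"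
  have tb2: "norm (?f (n+2)) \<le> s\<^sup>2 * B * (q^(n+2) / fact (n+2))" for n
  proof -
    have "norm (?f (n+2)) = (\<bar>s\<bar>^(n+2) / fact (n+2)) * norm (X (n+2))"
      by (simp add: power_abs abs_mult)
    also have "\<bar>s\<bar>^(n+2) = s\<^sup>2 * \<bar>s\<bar>^n" unfolding power_add power2_abs by (rule mult.commute)
    also have "(s\<^sup>2 * \<bar>s\<bar>^n / fact (n+2)) * norm (X (n+2)) \<le> (s\<^sup>2 * 1 / fact (n+2)) * (B * q^(n+2))"
      using Xb[of "n+2"] s by (intro mult_mono divide_right_mono mult_left_mono) (auto simp: power_le_one)
    finally show ?thesis by simp
  qed
  have sm2: "summable (\<lambda>n. s\<^sup>2 * B * (q^(n+2) / fact (n+2)))"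
    by (rule summable_mult[OF exp_tail_le(1)[OF q]])
  have "(\<Sum>n. ?f (n+2)) = (\<Sum>n. ?f n) - (\<Sum>i<2. ?f i)"
    by (rule suminf_minus_initial_segment[OF sm])
  also have "(\<Sum>i<2. ?f i) = X 0 + s *\<^sub>R X 1" by (simp add: numeral_2_eq_2)
  finally have eq: "(\<Sum>n. ?f n) - X 0 - s *\<^sub>R X 1 = (\<Sum>n. ?f (n+2))" by (simp add: algebra_simps)
  have sn: "summable (\<lambda>n. norm (?f (n+2)))"
    by (rule summable_comparison_test[OF _ sm2]) (use tb2 in auto)
  have "norm (\<Sum>n. ?f (n+2)) \<le> (\<Sum>n. norm (?f (n+2)))" by (rule summable_norm[OF sn])
  also have "\<dots> \<le> (\<Sum>n. s\<^sup>2 * B * (q^(n+2) / fact (n+2)))"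
    by (rule suminf_le[OF tb2 sn sm2])
  also have "\<dots> = s\<^sup>2 * B * (\<Sum>n. q^(n+2) / fact (n+2))"
    by (rule suminf_mult[OF exp_tail_le(1)[OF q]])
  also have "\<dots> \<le> s\<^sup>2 * B * exp q"
    using exp_tail_le(2)[OF q] B by (intro mult_left_mono) auto
  finally show "norm ((\<Sum>n. ?f n) - X 0 - s *\<^sub>R X 1) \<le> s\<^sup>2 * (B * exp q)" using eq by simp
qed

lemma ser_unif:
  fixes X :: "nat \<Rightarrow> real \<Rightarrow> 'a::banach"
  assumes Xb: "\<And>n t. t \<in> S \<Longrightarrow> norm (X n t) \<le> B * q^n" and q: "q \<ge> 0"
  shows "uniform_limit S (\<lambda>n t. \<Sum>i<n. (s^i / fact i) *\<^sub>R X i t) (\<lambda>t. \<Sum>i. (s^i / fact i) *\<^sub>R X i t) sequentially"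
proof (rule Weierstrass_m_test)
  show "norm ((s^n / fact n) *\<^sub>R X n t) \<le> B * ((\<bar>s\<bar> * q)^n / fact n)" if "t \<in> S" for n t
  proof -
    have "norm ((s^n / fact n) *\<^sub>R X n t) = (\<bar>s\<bar>^n / fact n) * norm (X n t)"
      by (simp add: power_abs abs_mult)
    also have "\<dots> \<le> (\<bar>s\<bar>^n / fact n) * (B * q^n)"
      using Xb[OF that, of n] by (intro mult_left_mono) auto
    finally show ?thesis by (simp add: power_mult_distrib field_simps)
  qed
  show "summable (\<lambda>n. B * ((\<bar>s\<bar> * q)^n / fact n))"
    by (rule summable_mult[OF exp_summable])
qed

lemma ser_cont:
  fixes X :: "nat \<Rightarrow> real \<Rightarrow> 'a::banach"
  assumes Xb: "\<And>n t. t \<in> S \<Longrightarrow> norm (X n t) \<le> B * q^n" and q: "q \<ge> 0"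
    and c: "\<And>n. continuous_on S (X n)"
  shows "continuous_on S (\<lambda>t. \<Sum>i. (s^i / fact i) *\<^sub>R X i t)"
  by (rule uniform_limit_theorem[OF _ ser_unif[OF Xb q]])
     (auto intro!: always_eventually continuous_on_sum continuous_on_scaleR c)

lemma ser_deriv:
  fixes X Y :: "nat \<Rightarrow> real \<Rightarrow> 'a::banach"
  assumes Xb: "\<And>n t. t \<in> S \<Longrightarrow> norm (X n t) \<le> B * q^n"
    and Yb: "\<And>n t. t \<in> S \<Longrightarrow> norm (Y n t) \<le> B * q^n" and q: "q \<ge> 0"
    and d: "\<And>n t. t \<in> S \<Longrightarrow> (X n has_vector_derivative Y n t) (at t within S)"
    and S: "convex S" and t: "t \<in> S"
  shows "((\<lambda>t. \<Sum>i. (s^i / fact i) *\<^sub>R X i t) has_vector_derivative (\<Sum>i. (s^i / fact i) *\<^sub>R Y i t)) (at t within S)"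
proof -
  let ?G = "\<lambda>t. \<Sum>i. (s^i / fact i) *\<^sub>R X i t"
  let ?Gy = "\<lambda>t. \<Sum>i. (s^i / fact i) *\<^sub>R Y i t"
  have sX: "summable (\<lambda>i. (s^i / fact i) *\<^sub>R X i t)" if "t \<in> S" for t
  proof -
    have "norm ((s^n / fact n) *\<^sub>R X n t) \<le> B * ((\<bar>s\<bar> * q)^n / fact n)" for n
    proof -
      have "norm ((s^n / fact n) *\<^sub>R X n t) = (\<bar>s\<bar>^n / fact n) * norm (X n t)"
        by (simp add: power_abs abs_mult)
      also have "\<dots> \<le> (\<bar>s\<bar>^n / fact n) * (B * q^n)"
        using Xb[OF that, of n] by (intro mult_left_mono) auto
      finally show ?thesis by (simp add: power_mult_distrib field_simps)
    qed
    note nb = this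
    show ?thesis
      by (rule summable_comparison_test[OF _ summable_mult[OF exp_summable]]) (use nb in auto)
  qed
  have ul: "uniform_limit S (\<lambda>n t. \<Sum>i<n. (s^i / fact i) *\<^sub>R Y i t) ?Gy sequentially"
    by (rule ser_unif[OF Yb q])
  have "\<exists>g. \<forall>x\<in>S. (\<lambda>n. (s^n / fact n) *\<^sub>R X n x) sums (g x) \<and>
        (g has_derivative (\<lambda>h. h *\<^sub>R ?Gy x)) (at x within S)"
  proof (rule has_derivative_series[OF S _ _ t])
    show "((\<lambda>t. (s^n / fact n) *\<^sub>R X n t) has_derivative (\<lambda>h. h *\<^sub>R ((s^n / fact n) *\<^sub>R Y n x))) (at x within S)"
      if "x \<in> S" for n x
      using bounded_linear.has_vector_derivative[OF bounded_linear_scaleR_right d[OF that, of n], of "s^n / fact n"]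
      unfolding has_vector_derivative_def .
    show "\<forall>\<^sub>F n in sequentially. \<forall>x\<in>S. \<forall>h. norm ((\<Sum>i<n. h *\<^sub>R ((s^i / fact i) *\<^sub>R Y i x)) - h *\<^sub>R ?Gy x) \<le> e * norm h"
      if "e > 0" for e
    proof -
      have "\<forall>\<^sub>F n in sequentially. \<forall>x\<in>S. dist (\<Sum>i<n. (s^i / fact i) *\<^sub>R Y i x) (?Gy x) < e"
        using uniform_limitD[OF ul that] .
      then show ?thesis
      proof (rule eventually_mono, intro ballI allI)
        fix n x h assume "\<forall>x\<in>S. dist (\<Sum>i<n. (s^i / fact i) *\<^sub>R Y i x) (?Gy x) < e" "x \<in> S"
        then have "norm ((\<Sum>i<n. (s^i / fact i) *\<^sub>R Y i x) - ?Gy x) < e" by (simp add: dist_norm)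
        then have "norm ((\<Sum>i<n. (s^i / fact i) *\<^sub>R Y i x) - ?Gy x) \<le> e" by linarith
        then have "\<bar>h\<bar> * norm ((\<Sum>i<n. (s^i / fact i) *\<^sub>R Y i x) - ?Gy x) \<le> \<bar>h\<bar> * e"
          by (intro mult_left_mono) auto
        moreover have "(\<Sum>i<n. h *\<^sub>R ((s^i / fact i) *\<^sub>R Y i x)) - h *\<^sub>R ?Gy x
            = h *\<^sub>R ((\<Sum>i<n. (s^i / fact i) *\<^sub>R Y i x) - ?Gy x)"
          by (simp only: scaleR_sum_right scaleR_diff_right)
        ultimately show "norm ((\<Sum>i<n. h *\<^sub>R ((s^i / fact i) *\<^sub>R Y i x)) - h *\<^sub>R ?Gy x) \<le> e * norm h"
          by (simp only: norm_scaleR real_norm_def mult.commute)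
      qed
    qed
    show "(\<lambda>n. (s^n / fact n) *\<^sub>R X n t) sums ?G t"
      using sX[OF t] by (rule summable_sums)
  qed
  then obtain g where g: "\<And>x. x \<in> S \<Longrightarrow> (\<lambda>n. (s^n / fact n) *\<^sub>R X n x) sums (g x)"
      "\<And>x. x \<in> S \<Longrightarrow> (g has_derivative (\<lambda>h. h *\<^sub>R ?Gy x)) (at x within S)" by blast
  have "?G x = g x" if "x \<in> S" for x using g(1)[OF that] by (simp add: sums_iff)
  then have "(?G has_derivative (\<lambda>h. h *\<^sub>R ?Gy t)) (at t within S)"
    using has_derivative_transform[OF t _ g(2)[OF t], of ?G] by metis
  then show ?thesis unfolding has_vector_derivative_def .
qed


definition ex2 :: "real set \<Rightarrow> (real \<Rightarrow> real \<Rightarrow> 'a::real_normed_vector) \<Rightarrow> (real \<Rightarrow> 'a) \<Rightarrow> (real \<Rightarrow> 'a) \<Rightarrow> bool" where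
  "ex2 S X X0 X1 \<longleftrightarrow> (\<exists>B. \<forall>t\<in>S. norm (X0 t) \<le> B \<and> norm (X1 t) \<le> B) \<and>
     (\<exists>C. \<forall>s t. \<bar>s\<bar> \<le> 1 \<longrightarrow> t \<in> S \<longrightarrow> norm (X s t - X0 t - s *\<^sub>R X1 t) \<le> C * s\<^sup>2)"

lemma ex2I:
  assumes "\<And>t. t \<in> S \<Longrightarrow> norm (X0 t) \<le> B" "\<And>t. t \<in> S \<Longrightarrow> norm (X1 t) \<le> B"
    "\<And>s t. \<bar>s\<bar> \<le> 1 \<Longrightarrow> t \<in> S \<Longrightarrow> norm (X s t - X0 t - s *\<^sub>R X1 t) \<le> C * s\<^sup>2"
  shows "ex2 S X X0 X1"
  unfolding ex2_def using assms by blast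

lemma ex2E:
  assumes "ex2 S X X0 X1"
  obtains B C where "B \<ge> 0" "C \<ge> 0" "\<And>t. t \<in> S \<Longrightarrow> norm (X0 t) \<le> B" "\<And>t. t \<in> S \<Longrightarrow> norm (X1 t) \<le> B"
    "\<And>s t. \<bar>s\<bar> \<le> 1 \<Longrightarrow> t \<in> S \<Longrightarrow> norm (X s t - X0 t - s *\<^sub>R X1 t) \<le> C * s\<^sup>2"
proof -
  obtain B C where B: "\<forall>t\<in>S. norm (X0 t) \<le> B \<and> norm (X1 t) \<le> B"
    and C: "\<forall>s t. \<bar>s\<bar> \<le> 1 \<longrightarrow> t \<in> S \<longrightarrow> norm (X s t - X0 t - s *\<^sub>R X1 t) \<le> C * s\<^sup>2"
    using assms unfolding ex2_def by blast
  show ?thesis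
  proof (rule that[of "max B 0" "max C 0"])
    show "norm (X s t - X0 t - s *\<^sub>R X1 t) \<le> max C 0 * s\<^sup>2" if "\<bar>s\<bar> \<le> 1" "t \<in> S" for s t
    proof -
      have "C * s\<^sup>2 \<le> max C 0 * s\<^sup>2" by (intro mult_right_mono) auto
      then show ?thesis using C that by force
    qed
  qed (use B in auto)
qed

lemma ex2_const: assumes "\<And>t. t \<in> S \<Longrightarrow> norm (X0 t) \<le> B" shows "ex2 S (\<lambda>s t. X0 t) X0 (\<lambda>t. 0)"
proof (rule ex2I[where B="max B 0" and C=0])
  show "norm (X0 t) \<le> max B 0" if "t \<in> S" for t
    using assms[OF that] by (rule order_trans[OF _ max.cobounded1])
qed simp_all

lemma ex2_cong:
  assumes "ex2 S X X0 X1" "\<And>t. t \<in> S \<Longrightarrow> X0 t = Y0 t" "\<And>t. t \<in> S \<Longrightarrow> X1 t = Y1 t"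
    "\<And>s t. \<bar>s\<bar> \<le> 1 \<Longrightarrow> t \<in> S \<Longrightarrow> X s t = Y s t"
  shows "ex2 S Y Y0 Y1"
proof -
  obtain B C where "B \<ge> 0" "C \<ge> 0" and B: "\<And>t. t \<in> S \<Longrightarrow> norm (X0 t) \<le> B" "\<And>t. t \<in> S \<Longrightarrow> norm (X1 t) \<le> B"
    and C: "\<And>s t. \<bar>s\<bar> \<le> 1 \<Longrightarrow> t \<in> S \<Longrightarrow> norm (X s t - X0 t - s *\<^sub>R X1 t) \<le> C * s\<^sup>2"
    by (rule ex2E[OF assms(1)]) blast
  show ?thesis
  proof (rule ex2I[where B=B and C=C])
    fix t assume t: "t \<in> S"
    show "norm (Y0 t) \<le> B" using B(1)[OF t] assms(2)[OF t] by simp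
    show "norm (Y1 t) \<le> B" using B(2)[OF t] assms(3)[OF t] by simp
  next
    fix s :: real and t assume s: "\<bar>s\<bar> \<le> 1" and t: "t \<in> S"
    show "norm (Y s t - Y0 t - s *\<^sub>R Y1 t) \<le> C * s\<^sup>2"
      using C[OF s t] assms(2)[OF t] assms(3)[OF t] assms(4)[OF s t] by simp
  qed
qed

lemma ex2_add:
  assumes "ex2 S X X0 X1" "ex2 S Y Y0 Y1"
  shows "ex2 S (\<lambda>s t. X s t + Y s t) (\<lambda>t. X0 t + Y0 t) (\<lambda>t. X1 t + Y1 t)"
proof -
  obtain B C where "B \<ge> 0" "C \<ge> 0" and B: "\<And>t. t \<in> S \<Longrightarrow> norm (X0 t) \<le> B" "\<And>t. t \<in> S \<Longrightarrow> norm (X1 t) \<le> B"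
    and C: "\<And>s t. \<bar>s\<bar> \<le> 1 \<Longrightarrow> t \<in> S \<Longrightarrow> norm (X s t - X0 t - s *\<^sub>R X1 t) \<le> C * s\<^sup>2"
    by (rule ex2E[OF assms(1)]) blast
  obtain B' C' where "B' \<ge> 0" "C' \<ge> 0" and B': "\<And>t. t \<in> S \<Longrightarrow> norm (Y0 t) \<le> B'" "\<And>t. t \<in> S \<Longrightarrow> norm (Y1 t) \<le> B'"
    and C': "\<And>s t. \<bar>s\<bar> \<le> 1 \<Longrightarrow> t \<in> S \<Longrightarrow> norm (Y s t - Y0 t - s *\<^sub>R Y1 t) \<le> C' * s\<^sup>2"
    by (rule ex2E[OF assms(2)]) blast
  show ?thesis
  proof (rule ex2I[where B="B + B'" and C="C + C'"])
    show "norm (X0 t + Y0 t) \<le> B + B'" if "t \<in> S" for t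
      using B(1)[OF that] B'(1)[OF that] norm_triangle_ineq[of "X0 t" "Y0 t"] by linarith
    show "norm (X1 t + Y1 t) \<le> B + B'" if "t \<in> S" for t
      using B(2)[OF that] B'(2)[OF that] norm_triangle_ineq[of "X1 t" "Y1 t"] by linarith
    show "norm (X s t + Y s t - (X0 t + Y0 t) - s *\<^sub>R (X1 t + Y1 t)) \<le> (C + C') * s\<^sup>2"
      if "\<bar>s\<bar> \<le> 1" "t \<in> S" for s t
    proof -
      have e: "X s t + Y s t - (X0 t + Y0 t) - s *\<^sub>R (X1 t + Y1 t) = (X s t - X0 t - s *\<^sub>R X1 t) + (Y s t - Y0 t - s *\<^sub>R Y1 t)"
        by (simp add: algebra_simps)
      have "norm (X s t + Y s t - (X0 t + Y0 t) - s *\<^sub>R (X1 t + Y1 t)) \<le> norm (X s t - X0 t - s *\<^sub>R X1 t) + norm (Y s t - Y0 t - s *\<^sub>R Y1 t)"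
        unfolding e by (rule norm_triangle_ineq)
      moreover have "(C + C') * s\<^sup>2 = C * s\<^sup>2 + C' * s\<^sup>2" by (simp add: distrib_right)
      ultimately show ?thesis using C[OF that] C'[OF that] by linarith
    qed
  qed
qed

lemma ex2_linear:
  assumes L: "bounded_linear L" and X: "ex2 S X X0 X1"
  shows "ex2 S (\<lambda>s t. L (X s t)) (\<lambda>t. L (X0 t)) (\<lambda>t. L (X1 t))"
proof -
  obtain K where K: "K > 0" "\<And>x. norm (L x) \<le> norm x * K"
    using bounded_linear.pos_bounded[OF L] by blast
  obtain B C where B: "B \<ge> 0" "C \<ge> 0" "\<And>t. t \<in> S \<Longrightarrow> norm (X0 t) \<le> B" "\<And>t. t \<in> S \<Longrightarrow> norm (X1 t) \<le> B"
    and C: "\<And>s t. \<bar>s\<bar> \<le> 1 \<Longrightarrow> t \<in> S \<Longrightarrow> norm (X s t - X0 t - s *\<^sub>R X1 t) \<le> C * s\<^sup>2"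
    by (rule ex2E[OF X]) blast
  show ?thesis
  proof (rule ex2I[where B="B * K" and C="C * K"])
    show "norm (L (X0 t)) \<le> B * K" if "t \<in> S" for t
      using K(2)[of "X0 t"] B(3)[OF that] K(1) by (meson mult_right_mono order_trans less_imp_le)
    show "norm (L (X1 t)) \<le> B * K" if "t \<in> S" for t
      using K(2)[of "X1 t"] B(4)[OF that] K(1) by (meson mult_right_mono order_trans less_imp_le)
    show "norm (L (X s t) - L (X0 t) - s *\<^sub>R L (X1 t)) \<le> C * K * s\<^sup>2" if "\<bar>s\<bar> \<le> 1" "t \<in> S" for s t
    proof -
      have "L (X s t) - L (X0 t) - s *\<^sub>R L (X1 t) = L (X s t - X0 t - s *\<^sub>R X1 t)"
        by (simp add: linear_diff[OF bounded_linear.linear[OF L]] linear_scale[OF bounded_linear.linear[OF L]])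
      moreover have "norm (L (X s t - X0 t - s *\<^sub>R X1 t)) \<le> (C * s\<^sup>2) * K"
        using K(2)[of "X s t - X0 t - s *\<^sub>R X1 t"] C[OF that] K(1)
        by (meson mult_right_mono order_trans less_imp_le)
      ultimately show ?thesis by (simp add: mult_ac)
    qed
  qed
qed

lemma ex2_bilinear:
  assumes b: "bounded_bilinear b" and X: "ex2 S X X0 X1" and Y: "ex2 S Y Y0 Y1"
  shows "ex2 S (\<lambda>s t. b (X s t) (Y s t)) (\<lambda>t. b (X0 t) (Y0 t)) (\<lambda>t. b (X1 t) (Y0 t) + b (X0 t) (Y1 t))"
proof -
  interpret bb: bounded_bilinear b by (rule b)
  obtain K where K: "K > 0" "\<And>x y. norm (b x y) \<le> norm x * norm y * K"
    using bb.pos_bounded by blast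
  obtain B C where B: "B \<ge> 0" "C \<ge> 0" "\<And>t. t \<in> S \<Longrightarrow> norm (X0 t) \<le> B" "\<And>t. t \<in> S \<Longrightarrow> norm (X1 t) \<le> B"
    and C: "\<And>s t. \<bar>s\<bar> \<le> 1 \<Longrightarrow> t \<in> S \<Longrightarrow> norm (X s t - X0 t - s *\<^sub>R X1 t) \<le> C * s\<^sup>2"
    by (rule ex2E[OF X]) blast
  obtain B' C' where B': "B' \<ge> 0" "C' \<ge> 0" "\<And>t. t \<in> S \<Longrightarrow> norm (Y0 t) \<le> B'" "\<And>t. t \<in> S \<Longrightarrow> norm (Y1 t) \<le> B'"
    and C': "\<And>s t. \<bar>s\<bar> \<le> 1 \<Longrightarrow> t \<in> S \<Longrightarrow> norm (Y s t - Y0 t - s *\<^sub>R Y1 t) \<le> C' * s\<^sup>2"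
    by (rule ex2E[OF Y]) blast
  have nb: "norm (b x y) \<le> P * Q * K" if "norm x \<le> P" "norm y \<le> Q" for x y P Q
  proof -
    have "0 \<le> P" using that(1) norm_ge_zero[of x] by linarith
    then have "norm x * norm y \<le> P * Q" using that by (intro mult_mono) auto
    then have "norm x * norm y * K \<le> P * Q * K" using K(1) by (intro mult_right_mono) auto
    then show ?thesis using K(2)[of x y] by linarith
  qed
  have BBK: "0 \<le> B * B' * K" using B B' K(1) by simp
  show ?thesis
  proof (rule ex2I[where B="2 * B * B' * K" and C="K * (C * (2 * B' + C') + 2 * B * C' + B * B')"])
    show "norm (b (X0 t) (Y0 t)) \<le> 2 * B * B' * K" if "t \<in> S" for t
      using nb[OF B(3)[OF that] B'(3)[OF that]] BBK by linarith
    show "norm (b (X1 t) (Y0 t) + b (X0 t) (Y1 t)) \<le> 2 * B * B' * K" if "t \<in> S" for t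
      using nb[OF B(4)[OF that] B'(3)[OF that]] nb[OF B(3)[OF that] B'(4)[OF that]]
        norm_triangle_ineq[of "b (X1 t) (Y0 t)" "b (X0 t) (Y1 t)"] by linarith
    show "norm (b (X s t) (Y s t) - b (X0 t) (Y0 t) - s *\<^sub>R (b (X1 t) (Y0 t) + b (X0 t) (Y1 t)))
        \<le> K * (C * (2 * B' + C') + 2 * B * C' + B * B') * s\<^sup>2" if s: "\<bar>s\<bar> \<le> 1" and t: "t \<in> S" for s t
    proof -
      define Ea where "Ea = X s t - X0 t - s *\<^sub>R X1 t"
      define Eb where "Eb = Y s t - Y0 t - s *\<^sub>R Y1 t"
      have Xe: "X s t = Ea + (X0 t + s *\<^sub>R X1 t)" by (simp add: Ea_def)
      have Ye: "Y s t = Eb + (Y0 t + s *\<^sub>R Y1 t)" by (simp add: Eb_def)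
      have id: "b (X s t) (Y s t) - b (X0 t) (Y0 t) - s *\<^sub>R (b (X1 t) (Y0 t) + b (X0 t) (Y1 t))
          = b Ea (Y s t) + b (X0 t + s *\<^sub>R X1 t) Eb + (s\<^sup>2) *\<^sub>R b (X1 t) (Y1 t)"
        unfolding Xe Ye
        by (simp add: bb.add_left bb.add_right bb.scaleR_left bb.scaleR_right algebra_simps power2_eq_square)
      have s2: "s\<^sup>2 \<le> 1" using s by (simp add: abs_le_square_iff[symmetric] abs_square_le_1)
      have nEX: "norm Ea \<le> C * s\<^sup>2" using C[OF s t] by (simp add: Ea_def)
      have nEY: "norm Eb \<le> C' * s\<^sup>2" using C'[OF s t] by (simp add: Eb_def)
      have "norm (s *\<^sub>R Y1 t) \<le> B'" using B'(4)[OF t] s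
        by (simp add: mult_le_one) (metis abs_ge_zero mult_left_le_one_le norm_ge_zero order_trans)
      have nEY1: "norm Eb \<le> C'" using nEY s2 B'(2) by (meson mult_left_le order_trans)
      have nY: "norm (Y s t) \<le> 2 * B' + C'"
      proof -
        have "norm (Y s t) \<le> norm Eb + (norm (Y0 t) + norm (s *\<^sub>R Y1 t))"
          unfolding Ye by (meson norm_triangle_ineq order_trans add_left_mono)
        then show ?thesis using nEY1 B'(3)[OF t] \<open>norm (s *\<^sub>R Y1 t) \<le> B'\<close> by linarith
      qed
      have "norm (s *\<^sub>R X1 t) \<le> B" using B(4)[OF t] s
        by (simp add: mult_le_one) (metis abs_ge_zero mult_left_le_one_le norm_ge_zero order_trans)
      then have nX0: "norm (X0 t + s *\<^sub>R X1 t) \<le> 2 * B"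
        using B(3)[OF t] norm_triangle_ineq[of "X0 t" "s *\<^sub>R X1 t"] by linarith
      have t1: "norm (b Ea (Y s t)) \<le> K * (C * (2 * B' + C')) * s\<^sup>2"
        using nb[OF nEX nY] by (simp add: mult_ac)
      have t2: "norm (b (X0 t + s *\<^sub>R X1 t) Eb) \<le> K * (2 * B * C') * s\<^sup>2"
        using nb[OF nX0 nEY] by (simp add: mult_ac)
      have t3: "norm ((s\<^sup>2) *\<^sub>R b (X1 t) (Y1 t)) \<le> K * (B * B') * s\<^sup>2"
      proof -
        have "s\<^sup>2 * norm (b (X1 t) (Y1 t)) \<le> s\<^sup>2 * (B * B' * K)"
          using nb[OF B(4)[OF t] B'(4)[OF t]] by (intro mult_left_mono) auto
        then show ?thesis by (simp add: mult_ac)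
      qed
      have "norm (b Ea (Y s t) + b (X0 t + s *\<^sub>R X1 t) Eb + (s\<^sup>2) *\<^sub>R b (X1 t) (Y1 t))
          \<le> norm (b Ea (Y s t)) + norm (b (X0 t + s *\<^sub>R X1 t) Eb) + norm ((s\<^sup>2) *\<^sub>R b (X1 t) (Y1 t))"
        by (meson norm_triangle_ineq order_trans add_right_mono)
      also have "\<dots> \<le> K * (C * (2 * B' + C')) * s\<^sup>2 + K * (2 * B * C') * s\<^sup>2 + K * (B * B') * s\<^sup>2"
        using t1 t2 t3 by linarith
      also have "\<dots> = K * (C * (2 * B' + C') + 2 * B * C' + B * B') * s\<^sup>2" by (simp add: algebra_simps)
      finally show ?thesis unfolding id .
    qed
  qed
qed


primrec Dp :: "(real \<Rightarrow> mat3) \<Rightarrow> (real \<Rightarrow> mat3) \<Rightarrow> nat \<Rightarrow> real \<Rightarrow> mat3" where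
  "Dp A A1 0 t = 0"
| "Dp A A1 (Suc n) t = A t ** Dp A A1 n t + A1 t ** mpow (A t) n"

lemma mpow_deriv:
  assumes "(A has_vector_derivative A1 t) (at t within S)"
  shows "((\<lambda>t. mpow (A t) n) has_vector_derivative Dp A A1 n t) (at t within S)"
proof (induction n)
  case 0 then show ?case by (simp add: has_vector_derivative_const)
next
  case (Suc n)
  show ?case unfolding mpow.simps Dp.simps
    by (rule bounded_bilinear.has_vector_derivative[OF bb_mm assms Suc])
qed

lemma mpow_scale: "mpow (c *\<^sub>R A) n = c^n *\<^sub>R mpow A n"
  by (induction n) (simp_all add: mm_scale_l mm_scale_r)

lemma mexp_ser: "mexp (s *\<^sub>R A) = (\<Sum>n. (s^n / fact n) *\<^sub>R mpow A n)"
  unfolding mexp_def mpow_scale scaleR_scaleR by simp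

lemma mm_K: "\<exists>K>0. \<forall>(a::mat3) (b::mat3). norm (a ** b) \<le> norm a * norm b * K"
  using bounded_bilinear.pos_bounded[OF bb_mm] by blast

lemma mpow_bound:
  assumes K: "\<And>(a::mat3) (b::mat3). norm (a ** b) \<le> norm a * norm b * K" and c: "K * norm A \<le> c" "0 \<le> c"
  shows "norm (mpow A n) \<le> norm (mat 1::mat3) * c^n"
proof (induction n)
  case 0 then show ?case by simp
next
  case (Suc n)
  have "norm (A ** mpow A n) \<le> (K * norm A) * norm (mpow A n)"
    using K[of A "mpow A n"] by (simp add: mult_ac)
  also have "\<dots> \<le> c * (norm (mat 1::mat3) * c^n)"
    using Suc c by (intro mult_mono) auto
  finally show ?case by (simp add: mult_ac)
qed

lemma Dp_bound:
  assumes K: "\<And>(a::mat3) (b::mat3). norm (a ** b) \<le> norm a * norm b * K"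
    and c: "K * norm (A t) \<le> c" "1 \<le> c" and c': "K * norm (A1 t) \<le> c'" "0 \<le> c'"
  shows "norm (Dp A A1 n t) \<le> real n * norm (mat 1::mat3) * c' * c^n"
proof (induction n)
  case 0 then show ?case by simp
next
  case (Suc n)
  let ?m = "norm (mat 1::mat3)"
  have mp: "norm (mpow (A t) n) \<le> ?m * c^n" by (rule mpow_bound[OF K c(1)]) (use c in auto)
  have "norm (Dp A A1 (Suc n) t) \<le> norm (A t ** Dp A A1 n t) + norm (A1 t ** mpow (A t) n)"
    by (simp add: norm_triangle_ineq)
  also have "norm (A t ** Dp A A1 n t) \<le> (K * norm (A t)) * norm (Dp A A1 n t)"
    using K[of "A t" "Dp A A1 n t"] by (simp add: mult_ac)
  also have "\<dots> \<le> c * (real n * ?m * c' * c^n)"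
    using Suc c by (intro mult_mono) auto
  also have "norm (A1 t ** mpow (A t) n) \<le> (K * norm (A1 t)) * norm (mpow (A t) n)"
    using K[of "A1 t" "mpow (A t) n"] by (simp add: mult_ac)
  also have "\<dots> \<le> c' * (?m * c^n)"
    using mp c' by (intro mult_mono) auto
  also have "c' * (?m * c^n) \<le> c' * (?m * c^(Suc n))"
    using c c' by (intro mult_left_mono) (auto intro: power_increasing)
  finally show ?case by (simp add: algebra_simps)
qed

lemma cont_bounded: "continuous_on {a..b} (f::real \<Rightarrow> 'a::real_normed_vector) \<Longrightarrow> \<exists>M\<ge>0. \<forall>t\<in>{a..b}. norm (f t) \<le> M"
proof -
  assume "continuous_on {a..b} f"
  then have "bounded (f ` {a..b})" by (intro compact_imp_bounded compact_continuous_image) auto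
  then obtain M where "\<forall>x\<in>f ` {a..b}. norm x \<le> M" by (auto simp: bounded_iff)
  then show ?thesis by (intro exI[of _ "max M 0"]) (auto intro: order_trans[OF _ max.cobounded1])
qed

lemma ex2_deriv:
  fixes k :: "real \<Rightarrow> real \<Rightarrow> real"
  assumes e: "ex2 {a..b} k k0 k1" and ab: "a \<le> b"
    and ik: "\<And>s. \<bar>s\<bar> \<le> 1 \<Longrightarrow> k s integrable_on {a..b}" and ik1: "k1 integrable_on {a..b}"
  shows "((\<lambda>s. integral {a..b} (k s)) has_real_derivative integral {a..b} k1) (at 0)"
proof -
  obtain B C where "B \<ge> 0" "C \<ge> 0" and B: "\<And>t. t \<in> {a..b} \<Longrightarrow> norm (k0 t) \<le> B" "\<And>t. t \<in> {a..b} \<Longrightarrow> norm (k1 t) \<le> B"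
    and C: "\<And>s t. \<bar>s\<bar> \<le> 1 \<Longrightarrow> t \<in> {a..b} \<Longrightarrow> norm (k s t - k0 t - s *\<^sub>R k1 t) \<le> C * s\<^sup>2"
    by (rule ex2E[OF e]) blast
  let ?F = "\<lambda>s. integral {a..b} (k s)"
  let ?D = "integral {a..b} k1"
  have k00: "k 0 t = k0 t" if "t \<in> {a..b}" for t using C[of 0 t] that by simp
  have bnd: "\<bar>(?F s - ?F 0) / (s - 0) - ?D\<bar> \<le> C * (b - a) * \<bar>s\<bar>" if s: "\<bar>s\<bar> \<le> 1" "s \<noteq> 0" for s
  proof -
    have i0: "k 0 integrable_on {a..b}" using ik[of 0] by simp
    have i1: "(\<lambda>t. k s t - k 0 t) integrable_on {a..b}" by (rule integrable_diff[OF ik[OF s(1)] i0])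
    have i2: "(\<lambda>t. s * k1 t) integrable_on {a..b}" using integrable_cmul[OF ik1, where c=s] by simp
    have i3: "(\<lambda>t. k s t - k 0 t - s * k1 t) integrable_on {a..b}" by (rule integrable_diff[OF i1 i2])
    have "integral {a..b} (\<lambda>t. k s t - k 0 t - s * k1 t) = integral {a..b} (\<lambda>t. k s t - k 0 t) - integral {a..b} (\<lambda>t. s * k1 t)"
      by (rule integral_diff[OF i1 i2])
    also have "integral {a..b} (\<lambda>t. k s t - k 0 t) = ?F s - ?F 0" by (rule integral_diff[OF ik[OF s(1)] i0])
    also have "integral {a..b} (\<lambda>t. s * k1 t) = s * ?D" using integral_cmul[where c=s and f=k1 and S="{a..b}"] by simp
    finally have "?F s - ?F 0 - s * ?D = integral {a..b} (\<lambda>t. k s t - k 0 t - s * k1 t)" by simp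
    also have "\<bar>\<dots>\<bar> \<le> integral {a..b} (\<lambda>t. C * s\<^sup>2)"
    proof -
      have "norm (integral {a..b} (\<lambda>t. k s t - k 0 t - s * k1 t)) \<le> integral {a..b} (\<lambda>t. C * s\<^sup>2)"
        by (rule integral_norm_bound_integral[OF i3]) (use C[OF s(1)] k00 in auto)
      then show ?thesis by simp
    qed
    also have "\<dots> = C * s\<^sup>2 * (b - a)" using ab by simp
    finally have "\<bar>?F s - ?F 0 - s * ?D\<bar> \<le> C * s\<^sup>2 * (b - a)" .
    moreover have "(?F s - ?F 0) / (s - 0) - ?D = (?F s - ?F 0 - s * ?D) / s" using s by (simp add: field_simps)
    ultimately have "\<bar>(?F s - ?F 0) / (s - 0) - ?D\<bar> \<le> C * s\<^sup>2 * (b - a) / \<bar>s\<bar>"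
      using s by (simp add: divide_right_mono abs_divide)
    also have "\<dots> = C * (b - a) * \<bar>s\<bar>" using s by (simp add: power2_eq_square field_simps abs_mult_self_eq)
    finally show ?thesis .
  qed
  have "((\<lambda>s. (?F s - ?F 0) / (s - 0) - ?D) \<longlongrightarrow> 0) (at 0)"
  proof (rule Lim_null_comparison)
    show "\<forall>\<^sub>F s in at 0. norm ((?F s - ?F 0) / (s - 0) - ?D) \<le> C * (b - a) * \<bar>s\<bar>"
      unfolding eventually_at by (rule exI[of _ 1]) (use bnd in \<open>auto simp: dist_norm\<close>)
    have "((\<lambda>s. C * (b - a) * \<bar>s\<bar>) \<longlongrightarrow> C * (b - a) * \<bar>0\<bar>) (at 0)"
      by (intro tendsto_intros)
    then show "((\<lambda>s. C * (b - a) * \<bar>s\<bar>) \<longlongrightarrow> 0) (at 0)" by simp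
  qed
  then show ?thesis unfolding has_field_derivative_iff LIM_zero_iff .
qed


lemmas cont_mm[continuous_intros] = bounded_bilinear.continuous_on[OF bb_mm]
lemmas cont_mv[continuous_intros] = bounded_bilinear.continuous_on[OF bb_mv]
lemmas cont_transpose[continuous_intros] = bounded_linear.continuous_on[OF bl_transpose]
lemmas cont_vee[continuous_intros] = bounded_linear.continuous_on[OF bl_vee]
lemmas cont_hat[continuous_intros] = bounded_linear.continuous_on[OF bl_hat]

lemma bl_Jv: "bounded_linear (\<lambda>x. (J::real^'n^'m) *v x)"
  by (rule bounded_bilinear.bounded_linear_right[OF bb_mv])

lemma cont_mpow: "continuous_on S A \<Longrightarrow> continuous_on S (\<lambda>t. mpow (A t) n)"
  by (induction n) (auto intro!: continuous_intros)

lemma cont_Dp: "continuous_on S A \<Longrightarrow> continuous_on S A1 \<Longrightarrow> continuous_on S (Dp A A1 n)"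
proof (induction n)
  case 0 then show ?case by (simp add: continuous_on_const)
next
  case (Suc n)
  then have "continuous_on S (\<lambda>t. A t ** Dp A A1 n t + A1 t ** mpow (A t) n)"
    by (auto intro!: continuous_intros cont_mpow)
  then show ?case by simp
qed

lemma action_deriv:
  fixes T :: real and \<Lambda> \<Lambda>1 :: "real \<Rightarrow> mat3" and \<theta> \<theta>1 :: "real \<Rightarrow> vec3" and J :: mat3
  assumes T: "0 < T"
    and dL: "\<And>t. t \<in> {0..T} \<Longrightarrow> (\<Lambda> has_vector_derivative \<Lambda>1 t) (at t within {0..T})"
    and cL: "continuous_on {0..T} \<Lambda>" and cL1: "continuous_on {0..T} \<Lambda>1"
    and dth: "\<And>t. t \<in> {0..T} \<Longrightarrow> (\<theta> has_vector_derivative \<theta>1 t) (at t within {0..T})"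
    and cth: "continuous_on {0..T} \<theta>" and cth1: "continuous_on {0..T} \<theta>1"
  shows "(action J T \<Lambda> \<theta> has_real_derivative
     integral {0..T} (\<lambda>t. (1/2) * (vee (transpose (\<Lambda> t) ** (hat (\<theta>1 t) ** \<Lambda> t)) \<bullet> (J *v vee (transpose (\<Lambda> t) ** \<Lambda>1 t))
        + vee (transpose (\<Lambda> t) ** \<Lambda>1 t) \<bullet> (J *v vee (transpose (\<Lambda> t) ** (hat (\<theta>1 t) ** \<Lambda> t)))))) (at 0)"
proof -
  define S where "S = {0..T}"
  define A where "A t = hat (\<theta> t)" for t
  define A1 where "A1 t = hat (\<theta>1 t)" for t
  have dA: "(A has_vector_derivative A1 t) (at t within S)" if "t \<in> S" for t
    unfolding A_def A1_def using bounded_linear.has_vector_derivative[OF bl_hat dth] that S_def by blast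
  have cA: "continuous_on S A" unfolding A_def S_def by (intro continuous_intros cth)
  have cA1: "continuous_on S A1" unfolding A1_def S_def by (intro continuous_intros cth1)
  obtain K where K: "K > 0" "\<And>(a::mat3) (b::mat3). norm (a ** b) \<le> norm a * norm b * K"
    using mm_K by blast
  obtain MA where MA: "MA \<ge> 0" "\<And>t. t \<in> S \<Longrightarrow> norm (A t) \<le> MA"
    using cont_bounded[OF cA[unfolded S_def]] S_def by blast
  obtain MA1 where MA1: "MA1 \<ge> 0" "\<And>t. t \<in> S \<Longrightarrow> norm (A1 t) \<le> MA1"
    using cont_bounded[OF cA1[unfolded S_def]] S_def by blast
  define c where "c = max 1 (K * MA)"
  define c' where "c' = K * MA1"
  have c1: "1 \<le> c" and c0: "0 \<le> c" unfolding c_def by auto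
  have c'0: "0 \<le> c'" unfolding c'_def using K MA1 by simp
  have hA: "K * norm (A t) \<le> c" if "t \<in> S" for t
    using MA(2)[OF that] K(1) unfolding c_def by (meson max.cobounded2 mult_left_mono order_trans less_imp_le)
  have hA1: "K * norm (A1 t) \<le> c'" if "t \<in> S" for t
    using MA1(2)[OF that] K(1) unfolding c'_def by (simp add: mult_left_mono)
  define m0 where "m0 = norm (mat 1::mat3)"
  define B where "B = m0 * (1 + c')"
  define q where "q = 2 * c"
  have q0: "0 \<le> q" unfolding q_def using c0 by simp
  have m00: "0 \<le> m0" unfolding m0_def by simp
  have mB: "m0 \<le> B"
  proof -
    have "m0 * 1 \<le> m0 * (1 + c')" using m00 c'0 by (intro mult_left_mono) auto
    then show ?thesis unfolding B_def by simp
  qed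
  have cq: "c^n \<le> q^n" for n unfolding q_def using c0 by (intro power_mono) auto
  have bX: "norm (mpow (A t) n) \<le> B * q^n" if "t \<in> S" for t n
  proof -
    have "norm (mpow (A t) n) \<le> m0 * c^n" unfolding m0_def by (rule mpow_bound[OF K(2) hA[OF that] c0])
    also have "\<dots> \<le> B * q^n" using mB m00 cq[of n] c0
      by (intro mult_mono) auto
    finally show ?thesis .
  qed
  have bY: "norm (Dp A A1 n t) \<le> B * q^n" if "t \<in> S" for t n
  proof -
    have "norm (Dp A A1 n t) \<le> real n * m0 * c' * c^n" unfolding m0_def
      by (rule Dp_bound[OF K(2)]) (use hA[OF that] c1 hA1[OF that] c'0 in auto)
    also have "\<dots> = (m0 * c') * (real n * c^n)" by (simp add: mult_ac)
    also have "\<dots> \<le> B * q^n"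
    proof -
      have "real n \<le> 2^n" using less_exp[of n] by (metis less_imp_le of_nat_less_numeral_power_cancel_iff)
      then have "real n * c^n \<le> 2^n * c^n" using c0 by (intro mult_right_mono) auto
      also have "\<dots> = q^n" unfolding q_def by (simp add: power_mult_distrib)
      finally have "real n * c^n \<le> q^n" .
      moreover have "m0 * c' \<le> B" unfolding B_def using m00 by (simp add: mult_left_mono)
      ultimately show ?thesis using m00 c'0 c0 mB by (intro mult_mono) auto
    qed
    finally show ?thesis .
  qed
  define G where "G s t = (\<Sum>n. (s^n / fact n) *\<^sub>R mpow (A t) n)" for s t
  define Gy where "Gy s t = (\<Sum>n. (s^n / fact n) *\<^sub>R Dp A A1 n t)" for s t
  have cvx: "convex S" unfolding S_def by (rule convex_real_interval)
  have dG: "(G s has_vector_derivative Gy s t) (at t within S)" if "t \<in> S" for s t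
    unfolding G_def Gy_def
    by (rule ser_deriv[where X="\<lambda>n t. mpow (A t) n" and Y="Dp A A1", OF bX bY q0 mpow_deriv[OF dA] cvx that])
  have cG: "continuous_on S (G s)" for s
    unfolding G_def by (rule ser_cont[OF bX q0 cont_mpow[OF cA]])
  have cGy: "continuous_on S (Gy s)" for s
    unfolding Gy_def by (rule ser_cont[OF bY q0 cont_Dp[OF cA cA1]])
  have var: "varied \<Lambda> \<theta> s = (\<lambda>t. G s t ** \<Lambda> t)" for s
    unfolding varied_def G_def A_def by (simp add: mexp_ser)
  have tdv: "tder T (varied \<Lambda> \<theta> s) t = G s t ** \<Lambda>1 t + Gy s t ** \<Lambda> t" if "t \<in> S" for s t
  proof -
    have "((\<lambda>t. G s t ** \<Lambda> t) has_vector_derivative G s t ** \<Lambda>1 t + Gy s t ** \<Lambda> t) (at t within {0..T})"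
      using bounded_bilinear.has_vector_derivative[OF bb_mm dG[OF that, unfolded S_def] dL[OF that[unfolded S_def]]] by simp
    then show ?thesis unfolding tder_def var
      by (rule vector_derivative_within_closed_interval[OF T that[unfolded S_def]])
  qed
  define W where "W s t = vee (transpose (G s t ** \<Lambda> t) ** (G s t ** \<Lambda>1 t + Gy s t ** \<Lambda> t))" for s t
  define kk where "kk s t = (1/2) * (W s t \<bullet> (J *v W s t))" for s t
  have act: "action J T \<Lambda> \<theta> = (\<lambda>s. integral S (kk s))"
  proof
    fix s
    show "action J T \<Lambda> \<theta> s = integral S (kk s)"
      unfolding action_def S_def[symmetric]
    proof (rule integral_cong)
      fix t assume "t \<in> S"
      then show "kin J (varied \<Lambda> \<theta> s t) (tder T (varied \<Lambda> \<theta> s) t) = kk s t"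
        using tdv[OF \<open>t \<in> S\<close>, of s] unfolding kin_def Let_def kk_def W_def var by simp
    qed
  qed
  obtain BL where BL: "BL \<ge> 0" "\<And>t. t \<in> S \<Longrightarrow> norm (\<Lambda> t) \<le> BL"
    using cont_bounded[OF cL] S_def by blast
  obtain BL1 where BL1: "BL1 \<ge> 0" "\<And>t. t \<in> S \<Longrightarrow> norm (\<Lambda>1 t) \<le> BL1"
    using cont_bounded[OF cL1] S_def by blast
  have eG: "ex2 S G (\<lambda>t. mat 1) A"
  proof (rule ex2I[where B="max m0 MA" and C="B * exp q"])
    show "norm (mat 1::mat3) \<le> max m0 MA" unfolding m0_def by simp
    show "norm (A t) \<le> max m0 MA" if "t \<in> S" for t using MA(2)[OF that] by (simp add: le_max_iff_disj)
    show "norm (G s t - mat 1 - s *\<^sub>R A t) \<le> B * exp q * s\<^sup>2" if s: "\<bar>s\<bar> \<le> 1" and t: "t \<in> S" for s t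
      using ser_bound(2)[of "\<lambda>n. mpow (A t) n" B q s, OF bX[OF t] q0 s] unfolding G_def
      by (simp add: mult_ac One_nat_def)
  qed
  have eGy: "ex2 S Gy (\<lambda>t. 0) A1"
  proof (rule ex2I[where B="MA1" and C="B * exp q"])
    show "norm (0::mat3) \<le> MA1" using MA1 by simp
    show "norm (A1 t) \<le> MA1" if "t \<in> S" for t using MA1(2)[OF that] .
    show "norm (Gy s t - 0 - s *\<^sub>R A1 t) \<le> B * exp q * s\<^sup>2" if s: "\<bar>s\<bar> \<le> 1" and t: "t \<in> S" for s t
      using ser_bound(2)[of "\<lambda>n. Dp A A1 n t" B q s, OF bY[OF t] q0 s] unfolding Gy_def
      by (simp add: mult_ac One_nat_def)
  qed
  have eL: "ex2 S (\<lambda>s t. \<Lambda> t) \<Lambda> (\<lambda>t. 0)" by (rule ex2_const[OF BL(2)])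
  have eL1: "ex2 S (\<lambda>s t. \<Lambda>1 t) \<Lambda>1 (\<lambda>t. 0)" by (rule ex2_const[OF BL1(2)])
  have eP: "ex2 S (\<lambda>s t. G s t ** \<Lambda> t) (\<lambda>t. mat 1 ** \<Lambda> t) (\<lambda>t. A t ** \<Lambda> t + mat 1 ** 0)"
    by (rule ex2_bilinear[OF bb_mm eG eL])
  have eTP: "ex2 S (\<lambda>s t. transpose (G s t ** \<Lambda> t)) (\<lambda>t. transpose (mat 1 ** \<Lambda> t)) (\<lambda>t. transpose (A t ** \<Lambda> t + mat 1 ** 0))"
    by (rule ex2_linear[OF bl_transpose eP])
  have eQ1: "ex2 S (\<lambda>s t. G s t ** \<Lambda>1 t) (\<lambda>t. mat 1 ** \<Lambda>1 t) (\<lambda>t. A t ** \<Lambda>1 t + mat 1 ** 0)"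
    by (rule ex2_bilinear[OF bb_mm eG eL1])
  have eQ2: "ex2 S (\<lambda>s t. Gy s t ** \<Lambda> t) (\<lambda>t. 0 ** \<Lambda> t) (\<lambda>t. A1 t ** \<Lambda> t + (0::mat3) ** (0::mat3))"
    by (rule ex2_bilinear[OF bb_mm eGy eL])
  have eQ: "ex2 S (\<lambda>s t. G s t ** \<Lambda>1 t + Gy s t ** \<Lambda> t) (\<lambda>t. mat 1 ** \<Lambda>1 t + 0 ** \<Lambda> t)
      (\<lambda>t. (A t ** \<Lambda>1 t + mat 1 ** 0) + (A1 t ** \<Lambda> t + (0::mat3) ** (0::mat3)))"
    by (rule ex2_add[OF eQ1 eQ2])
  have eX0: "ex2 S (\<lambda>s t. transpose (G s t ** \<Lambda> t) ** (G s t ** \<Lambda>1 t + Gy s t ** \<Lambda> t))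
      (\<lambda>t. transpose (mat 1 ** \<Lambda> t) ** (mat 1 ** \<Lambda>1 t + 0 ** \<Lambda> t))
      (\<lambda>t. transpose (A t ** \<Lambda> t + mat 1 ** 0) ** (mat 1 ** \<Lambda>1 t + 0 ** \<Lambda> t)
         + transpose (mat 1 ** \<Lambda> t) ** ((A t ** \<Lambda>1 t + mat 1 ** 0) + (A1 t ** \<Lambda> t + (0::mat3) ** (0::mat3))))"
    by (rule ex2_bilinear[OF bb_mm eTP eQ])
  have eX: "ex2 S (\<lambda>s t. transpose (G s t ** \<Lambda> t) ** (G s t ** \<Lambda>1 t + Gy s t ** \<Lambda> t))
      (\<lambda>t. transpose (\<Lambda> t) ** \<Lambda>1 t) (\<lambda>t. transpose (\<Lambda> t) ** (A1 t ** \<Lambda> t))"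
  proof (rule ex2_cong[OF eX0])
    fix t
    show "transpose (mat 1 ** \<Lambda> t) ** (mat 1 ** \<Lambda>1 t + 0 ** \<Lambda> t) = transpose (\<Lambda> t) ** \<Lambda>1 t" by simp
    have "transpose (A t ** \<Lambda> t) = - (transpose (\<Lambda> t) ** A t)"
      unfolding matrix_transpose_mul A_def transpose_hat by (simp add: mm_neg_r)
    then show "transpose (A t ** \<Lambda> t + mat 1 ** 0) ** (mat 1 ** \<Lambda>1 t + 0 ** \<Lambda> t)
         + transpose (mat 1 ** \<Lambda> t) ** ((A t ** \<Lambda>1 t + mat 1 ** 0) + (A1 t ** \<Lambda> t + (0::mat3) ** (0::mat3)))
       = transpose (\<Lambda> t) ** (A1 t ** \<Lambda> t)"
      by (simp add: mm_neg_l matrix_add_ldistrib matrix_mul_assoc)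
  qed simp
  have eW: "ex2 S W (\<lambda>t. vee (transpose (\<Lambda> t) ** \<Lambda>1 t)) (\<lambda>t. vee (transpose (\<Lambda> t) ** (A1 t ** \<Lambda> t)))"
    unfolding W_def by (rule ex2_linear[OF bl_vee eX])
  have eJW: "ex2 S (\<lambda>s t. J *v W s t) (\<lambda>t. J *v vee (transpose (\<Lambda> t) ** \<Lambda>1 t)) (\<lambda>t. J *v vee (transpose (\<Lambda> t) ** (A1 t ** \<Lambda> t)))"
    by (rule ex2_linear[OF bl_Jv eW])
  have eK0: "ex2 S (\<lambda>s t. W s t \<bullet> (J *v W s t))
     (\<lambda>t. vee (transpose (\<Lambda> t) ** \<Lambda>1 t) \<bullet> (J *v vee (transpose (\<Lambda> t) ** \<Lambda>1 t)))
     (\<lambda>t. vee (transpose (\<Lambda> t) ** (A1 t ** \<Lambda> t)) \<bullet> (J *v vee (transpose (\<Lambda> t) ** \<Lambda>1 t))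
        + vee (transpose (\<Lambda> t) ** \<Lambda>1 t) \<bullet> (J *v vee (transpose (\<Lambda> t) ** (A1 t ** \<Lambda> t))))"
    by (rule ex2_bilinear[OF bounded_bilinear_inner eW eJW])
  have eK: "ex2 S kk
     (\<lambda>t. (1/2) * (vee (transpose (\<Lambda> t) ** \<Lambda>1 t) \<bullet> (J *v vee (transpose (\<Lambda> t) ** \<Lambda>1 t))))
     (\<lambda>t. (1/2) * (vee (transpose (\<Lambda> t) ** (A1 t ** \<Lambda> t)) \<bullet> (J *v vee (transpose (\<Lambda> t) ** \<Lambda>1 t))
        + vee (transpose (\<Lambda> t) ** \<Lambda>1 t) \<bullet> (J *v vee (transpose (\<Lambda> t) ** (A1 t ** \<Lambda> t)))))"
    unfolding kk_def by (rule ex2_linear[OF bounded_linear_mult_right eK0])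
  have ik: "kk s integrable_on {0..T}" for s
    unfolding kk_def W_def
    by (rule integrable_continuous_interval)
       (use cG[unfolded S_def] cGy[unfolded S_def] in \<open>intro continuous_intros cL cL1\<close>)
  have ik1: "(\<lambda>t. (1/2) * (vee (transpose (\<Lambda> t) ** (A1 t ** \<Lambda> t)) \<bullet> (J *v vee (transpose (\<Lambda> t) ** \<Lambda>1 t))
        + vee (transpose (\<Lambda> t) ** \<Lambda>1 t) \<bullet> (J *v vee (transpose (\<Lambda> t) ** (A1 t ** \<Lambda> t))))) integrable_on {0..T}"
    unfolding A1_def
    by (rule integrable_continuous_interval) (intro continuous_intros cL cL1 cth1)
  have "((\<lambda>s. integral {0..T} (kk s)) has_real_derivative integral {0..T} (\<lambda>t. (1/2) * (vee (transpose (\<Lambda> t) ** (A1 t ** \<Lambda> t)) \<bullet> (J *v vee (transpose (\<Lambda> t) ** \<Lambda>1 t))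
        + vee (transpose (\<Lambda> t) ** \<Lambda>1 t) \<bullet> (J *v vee (transpose (\<Lambda> t) ** (A1 t ** \<Lambda> t)))))) (at 0)"
    by (rule ex2_deriv[OF eK[unfolded S_def]]) (use T ik ik1 in auto)
  then show ?thesis unfolding act S_def A1_def .
qed


lemma inner_mv: "((A::real^'n^'m) *v x) \<bullet> y = x \<bullet> (transpose A *v y)"
proof -
  have "(A *v x) \<bullet> y = y \<bullet> (A *v x)" by (rule inner_commute)
  also have "\<dots> = (y v* A) \<bullet> x" by (rule dot_lmul_matrix[symmetric])
  also have "\<dots> = x \<bullet> (transpose A *v y)" by (simp add: inner_commute)
  finally show ?thesis .
qed

lemma SO3_facts:
  assumes "L \<in> SO3"
  shows "transpose L ** L = mat 1" "L ** transpose L = mat 1" "rotation_matrix (transpose L)"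
proof -
  show 1: "transpose L ** L = mat 1" using assms by (simp add: SO3_def)
  then have o: "orthogonal_matrix L" by (simp add: orthogonal_matrix)
  then show "L ** transpose L = mat 1" by (simp add: orthogonal_matrix_def)
  show "rotation_matrix (transpose L)"
    using o assms by (simp add: rotation_matrix_def SO3_def)
qed

lemma conj_hat:
  assumes "L \<in> SO3"
  shows "transpose L ** (hat v ** L) = hat (transpose L *v v)"
proof -
  have r: "rotation_matrix (transpose L)" and tl: "transpose L ** L = mat 1" using SO3_facts[OF assms] by auto
  show ?thesis
  proof (rule matrix_eq[THEN iffD2], intro allI)
    fix x
    have "(transpose L ** (hat v ** L)) *v x = transpose L *v (cross3 v (L *v x))"
      by (simp add: matrix_vector_mul_assoc[symmetric] hat_mv)
    also have "\<dots> = cross3 (transpose L *v v) (transpose L *v (L *v x))"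
      using cross_rotation_matrix[OF r, of v "L *v x"] by simp
    also have "transpose L *v (L *v x) = x" by (simp add: matrix_vector_mul_assoc tl)
    finally show "(transpose L ** (hat v ** L)) *v x = hat (transpose L *v v) *v x"
      by (simp add: hat_mv)
  qed
qed

lemma k1_eq:
  assumes L: "L \<in> SO3" and sk: "L1 ** transpose L + L ** transpose L1 = 0" and J: "transpose J = J"
  shows "(1/2) * (vee (transpose L ** (hat v ** L)) \<bullet> (J *v vee (transpose L ** L1))
        + vee (transpose L ** L1) \<bullet> (J *v vee (transpose L ** (hat v ** L))))
       = ((L ** J ** transpose L) *v vee (L1 ** transpose L)) \<bullet> v"
proof -
  have tl: "transpose L ** L = mat 1" and lt: "L ** transpose L = mat 1" using SO3_facts[OF L] by auto
  define Y where "Y = L1 ** transpose L"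
  define w where "w = vee Y"
  have "transpose Y = L ** transpose L1" unfolding Y_def by (simp add: matrix_transpose_mul)
  also have "\<dots> = - Y" using sk unfolding Y_def by (simp add: eq_neg_iff_add_eq_0 add.commute)
  finally have hY: "hat w = Y" unfolding w_def by (rule hat_vee_skew)
  have "transpose L ** L1 = transpose L ** (Y ** L)"
    unfolding Y_def by (simp add: matrix_mul_assoc[symmetric] tl)
  also have "\<dots> = hat (transpose L *v w)" unfolding hY[symmetric] by (rule conj_hat[OF L])
  finally have W0: "vee (transpose L ** L1) = transpose L *v w" by simp
  have W1: "vee (transpose L ** (hat v ** L)) = transpose L *v v" by (simp add: conj_hat[OF L])
  have sym: "(transpose L *v w) \<bullet> (J *v (transpose L *v v)) = (transpose L *v v) \<bullet> (J *v (transpose L *v w))"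
    by (metis J inner_commute inner_mv)
  have "(transpose L *v v) \<bullet> (J *v (transpose L *v w)) = v \<bullet> (L *v (J *v (transpose L *v w)))"
    by (subst inner_mv) (simp only: transpose_transpose)
  also have "\<dots> = ((L ** J ** transpose L) *v w) \<bullet> v"
    by (simp del: transpose_matrix_vector add: matrix_vector_mul_assoc matrix_mul_assoc inner_commute)
  finally have e: "(transpose L *v v) \<bullet> (J *v (transpose L *v w)) = ((L ** J ** transpose L) *v w) \<bullet> v" .
  have h: "(1/2) * (x + x) = (x::real)" for x by simp
  show ?thesis unfolding Y_def[symmetric] w_def[symmetric] W0 W1 sym e by (rule h)
qed

lemma par_eq:
  assumes L: "L \<in> SO3" and J: "transpose J = J" and c: "J *v D3 = c *\<^sub>R D3"
  shows "((L ** J ** transpose L) *v w) \<bullet> (L *v D3) = c * (w \<bullet> (L *v D3))"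
proof -
  have tl: "transpose L ** L = mat 1" using SO3_facts[OF L] by auto
  have "((L ** J ** transpose L) *v w) \<bullet> (L *v D3) = w \<bullet> (transpose (L ** J ** transpose L) *v (L *v D3))"
    by (rule inner_mv)
  also have "transpose (L ** J ** transpose L) *v (L *v D3) = L *v (J *v D3)"
  proof -
    have tr: "transpose (L ** J ** transpose L) = L ** J ** transpose L"
      by (simp add: matrix_transpose_mul J matrix_mul_assoc)
    have ld: "transpose L *v (L *v D3) = D3" by (simp only: matrix_vector_mul_assoc tl matrix_vector_mul_lid)
    have "(L ** J ** transpose L) *v (L *v D3) = L *v (J *v (transpose L *v (L *v D3)))"
      by (simp only: matrix_vector_mul_assoc[symmetric])
    then show ?thesis unfolding tr ld .
  qed
  also have "\<dots> = c *\<^sub>R (L *v D3)" by (simp add: c matrix_vector_mult_scaleR)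
  finally show ?thesis by simp
qed

lemma dd1:
  assumes L: "L \<in> SO3" and n: "norm D3 = 1"
  shows "(L *v D3) \<bullet> (L *v D3) = 1"
proof -
  have tl: "transpose L ** L = mat 1" using SO3_facts[OF L] by auto
  have "(L *v D3) \<bullet> (L *v D3) = D3 \<bullet> (transpose L *v (L *v D3))" by (rule inner_mv)
  also have "\<dots> = D3 \<bullet> D3" by (simp add: matrix_vector_mul_assoc tl)
  also have "\<dots> = 1" using n by (metis norm_eq_sqrt_inner real_sqrt_eq_1_iff)
  finally show ?thesis .
qed


lemma ibp:
  fixes f g :: "real \<Rightarrow> real^3"
  assumes T: "0 \<le> T"
    and df: "\<And>t. t \<in> {0..T} \<Longrightarrow> (f has_vector_derivative f1 t) (at t within {0..T})"
    and dg: "\<And>t. t \<in> {0..T} \<Longrightarrow> (g has_vector_derivative g1 t) (at t within {0..T})"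
    and cf: "continuous_on {0..T} f" and cf1: "continuous_on {0..T} f1"
    and cg: "continuous_on {0..T} g" and cg1: "continuous_on {0..T} g1"
    and g0: "g 0 = 0" and gT: "g T = 0"
  shows "integral {0..T} (\<lambda>t. f t \<bullet> g1 t) = - integral {0..T} (\<lambda>t. f1 t \<bullet> g t)"
proof -
  have d: "((\<lambda>t. f t \<bullet> g t) has_vector_derivative (f t \<bullet> g1 t + f1 t \<bullet> g t)) (at t within {0..T})"
    if "t \<in> {0..T}" for t
    by (rule bounded_bilinear.has_vector_derivative[OF bounded_bilinear_inner df[OF that] dg[OF that]])
  have "((\<lambda>t. f t \<bullet> g1 t + f1 t \<bullet> g t) has_integral (f T \<bullet> g T - f 0 \<bullet> g 0)) {0..T}"
    by (rule fundamental_theorem_of_calculus[OF T d])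
  then have "integral {0..T} (\<lambda>t. f t \<bullet> g1 t + f1 t \<bullet> g t) = 0"
    using g0 gT by (simp add: integral_unique)
  moreover have "integral {0..T} (\<lambda>t. f t \<bullet> g1 t + f1 t \<bullet> g t) = integral {0..T} (\<lambda>t. f t \<bullet> g1 t) + integral {0..T} (\<lambda>t. f1 t \<bullet> g t)"
    by (rule integral_add; rule integrable_continuous_interval; intro continuous_intros cf cf1 cg cg1)
  ultimately show ?thesis by linarith
qed

lemma skew_deriv:
  assumes T: "0 < T"
    and dL: "\<And>t. t \<in> {0..T} \<Longrightarrow> (\<Lambda> has_vector_derivative \<Lambda>1 t) (at t within {0..T})"
    and rot: "\<forall>t\<in>{0..T}. \<Lambda> t \<in> SO3" and t: "t \<in> {0..T}"
  shows "\<Lambda>1 t ** transpose (\<Lambda> t) + \<Lambda> t ** transpose (\<Lambda>1 t) = 0"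
proof -
  have d1: "((\<lambda>t. \<Lambda> t ** transpose (\<Lambda> t)) has_vector_derivative
      \<Lambda> t ** transpose (\<Lambda>1 t) + \<Lambda>1 t ** transpose (\<Lambda> t)) (at t within {0..T})"
    by (rule bounded_bilinear.has_vector_derivative[OF bb_mm dL[OF t] bounded_linear.has_vector_derivative[OF bl_transpose dL[OF t]]])
  have d2: "((\<lambda>t. \<Lambda> t ** transpose (\<Lambda> t)) has_vector_derivative 0) (at t within {0..T})"
    by (rule has_vector_derivative_transform[OF t _ has_vector_derivative_const[of "mat 1"]])
       (use rot SO3_facts in auto)
  have "\<Lambda> t ** transpose (\<Lambda>1 t) + \<Lambda>1 t ** transpose (\<Lambda> t) = 0"
    using vector_derivative_within_closed_interval[OF T t d1] vector_derivative_within_closed_interval[OF T t d2]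
    by simp
  then show ?thesis by (simp add: add.commute)
qed

lemma tder_nth: "tder T f = nth_vderiv 1 {0..T} f"
  by (rule ext) (simp only: tder_def One_nat_def nth_vderiv_1)

lemma vd_zero_on:
  fixes f :: "real \<Rightarrow> real"
  assumes T: "0 < T" and z: "\<And>x. x \<in> {0..T} \<Longrightarrow> f x = 0" and t: "t \<in> {0..T}"
  shows "tder T f t = 0"
proof -
  have "(f has_vector_derivative 0) (at t within {0..T})"
    by (rule has_vector_derivative_transform[OF t _ has_vector_derivative_const[of 0]]) (use z in auto)
  then show ?thesis unfolding tder_def by (rule vector_derivative_within_closed_interval[OF T t])
qed

lemma vd_eq_on:
  assumes z: "\<And>x. x \<in> {0..T} \<Longrightarrow> f x = g x" and t: "t \<in> {0..T}"
  shows "tder T f t = tder T g t"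
  unfolding tder_def by (rule vd_cong[OF t z])


theorem theorem5:
  fixes D1 D2 D3 :: "real^3" and J :: "real^3^3" and T :: real
    and \<Lambda> :: "real \<Rightarrow> real^3^3"
  assumes onb: "norm D1 = 1" "norm D2 = 1" "norm D3 = 1"
      "D1 \<bullet> D2 = 0" "D1 \<bullet> D3 = 0" "D2 \<bullet> D3 = 0"
    and orient: "cross3 D1 D2 = D3"
    and Jsym: "transpose J = J"
    and Jpos: "\<forall>x. x \<noteq> 0 \<longrightarrow> x \<bullet> (J *v x) > 0"
    and Jeig: "\<exists>c. J *v D3 = c *\<^sub>R D3"
    and Tpos: "T > 0"
    and smooth: "smooth_on {0..T} \<Lambda>"
    and rot: "\<forall>t\<in>{0..T}. \<Lambda> t \<in> SO3"
  shows
   "(((\<forall>t\<in>{0..T}. angvel T \<Lambda> t \<bullet> d3 D3 \<Lambda> t = 0) \<and>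
      (\<exists>\<mu>::real \<Rightarrow> real. continuous_on {0..T} \<mu> \<and>
         (\<forall>\<delta>\<theta>::real \<Rightarrow> real^3. smooth_on {0..T} \<delta>\<theta> \<and> \<delta>\<theta> 0 = 0 \<and> \<delta>\<theta> T = 0 \<longrightarrow>
            (action J T \<Lambda> \<delta>\<theta> has_real_derivative
               - integral {0..T} (\<lambda>t. \<mu> t * (\<delta>\<theta> t \<bullet> d3 D3 \<Lambda> t))) (at 0))))
    \<longleftrightarrow>
    (\<exists>\<mu>::real \<Rightarrow> real. \<forall>t\<in>{0..T}.
        covd D3 T \<Lambda> (pi_perp J D3 T \<Lambda>) t
          + pi_par J D3 T \<Lambda> t *\<^sub>R tder T (d3 D3 \<Lambda>) t = 0
      \<and> tder T (pi_par J D3 T \<Lambda>) t + pi_perp J D3 T \<Lambda> t \<bullet> tder T (d3 D3 \<Lambda>) t + \<mu> t = 0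
      \<and> angvel T \<Lambda> t \<bullet> d3 D3 \<Lambda> t = 0))
   \<and>
   (\<forall>\<mu>::real \<Rightarrow> real.
      (\<forall>t\<in>{0..T}.
        covd D3 T \<Lambda> (pi_perp J D3 T \<Lambda>) t
          + pi_par J D3 T \<Lambda> t *\<^sub>R tder T (d3 D3 \<Lambda>) t = 0
      \<and> tder T (pi_par J D3 T \<Lambda>) t + pi_perp J D3 T \<Lambda> t \<bullet> tder T (d3 D3 \<Lambda>) t + \<mu> t = 0
      \<and> angvel T \<Lambda> t \<bullet> d3 D3 \<Lambda> t = 0)
    \<longleftrightarrow>
      (\<forall>t\<in>{0..T}.
        covd D3 T \<Lambda> (pi_perp J D3 T \<Lambda>) t = 0
      \<and> pi_perp J D3 T \<Lambda> t \<bullet> tder T (d3 D3 \<Lambda>) t + \<mu> t = 0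
      \<and> angvel T \<Lambda> t \<bullet> d3 D3 \<Lambda> t = 0))"
proof -
  interpret I: ivl 0 T by unfold_locales (rule Tpos)
  define L1 where "L1 = tder T \<Lambda>"
  define w where "w = angvel T \<Lambda>"
  define d where "d = d3 D3 \<Lambda>"
  define p where "p = angmom J T \<Lambda>"
  define p1 where "p1 = tder T p"
  define P where "P t = p1 t - (p1 t \<bullet> d t) *\<^sub>R d t" for t
  obtain c where c: "J *v D3 = c *\<^sub>R D3" using Jeig by blast
  have Tge: "0 \<le> T" using Tpos by simp
  have sL: "smooth_on {0..T} \<Lambda>" by (rule smooth)
  have sL1: "smooth_on {0..T} L1" unfolding L1_def tder_nth by (rule I.smooth_deriv[OF sL])
  have sLt: "smooth_on {0..T} (\<lambda>t. transpose (\<Lambda> t))" by (rule I.smooth_linear[OF bl_transpose sL])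
  have w_eq: "w = (\<lambda>t. vee (L1 t ** transpose (\<Lambda> t)))"
    unfolding w_def L1_def angvel_def by (rule refl)
  have sw: "smooth_on {0..T} w" unfolding w_eq
    by (rule I.smooth_linear[OF bl_vee I.smooth_bilinear[OF bb_mm sL1 sLt]])
  have d_eq: "d = (\<lambda>t. \<Lambda> t *v D3)" unfolding d_def d3_def by (rule refl)
  have sd: "smooth_on {0..T} d" unfolding d_eq
    by (rule I.smooth_bilinear[OF bb_mv sL I.smooth_const])
  have p_eq: "p = (\<lambda>t. (\<Lambda> t ** J ** transpose (\<Lambda> t)) *v w t)"
    unfolding p_def w_def angmom_def by (rule refl)
  have sLJ: "smooth_on {0..T} (\<lambda>t. \<Lambda> t ** J)" by (rule I.smooth_bilinear[OF bb_mm sL I.smooth_const])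
  have sLJL: "smooth_on {0..T} (\<lambda>t. \<Lambda> t ** J ** transpose (\<Lambda> t))" by (rule I.smooth_bilinear[OF bb_mm sLJ sLt])
  have sp: "smooth_on {0..T} p" unfolding p_eq by (rule I.smooth_bilinear[OF bb_mv sLJL sw])
  have sp1: "smooth_on {0..T} p1" unfolding p1_def tder_nth by (rule I.smooth_deriv[OF sp])
  have sneg: "smooth_on {0..T} (\<lambda>t. - f t)" if "smooth_on {0..T} f" for f :: "real \<Rightarrow> real^3"
    by (rule I.smooth_linear[OF bounded_linear_minus[OF bounded_linear_ident] that])
  have sP: "smooth_on {0..T} P"
  proof -
    have "smooth_on {0..T} (\<lambda>t. p1 t \<bullet> d t)" by (rule I.smooth_bilinear[OF bounded_bilinear_inner sp1 sd])
    then have "smooth_on {0..T} (\<lambda>t. (p1 t \<bullet> d t) *\<^sub>R d t)" by (rule I.smooth_bilinear[OF bounded_bilinear_scaleR _ sd])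
    then have "smooth_on {0..T} (\<lambda>t. p1 t + - ((p1 t \<bullet> d t) *\<^sub>R d t))" by (rule I.smooth_add[OF sp1 sneg])
    then show ?thesis unfolding P_def by simp
  qed
  have cL: "continuous_on {0..T} \<Lambda>" by (rule I.smooth_cont[OF sL])
  have cL1: "continuous_on {0..T} L1" by (rule I.smooth_cont[OF sL1])
  have cd: "continuous_on {0..T} d" by (rule I.smooth_cont[OF sd])
  have cp: "continuous_on {0..T} p" by (rule I.smooth_cont[OF sp])
  have cp1: "continuous_on {0..T} p1" by (rule I.smooth_cont[OF sp1])
  have cP: "continuous_on {0..T} P" by (rule I.smooth_cont[OF sP])
  have dL: "(\<Lambda> has_vector_derivative L1 t) (at t within {0..T})" if "t \<in> {0..T}" for t
    unfolding L1_def tder_nth by (rule I.smooth_has_deriv[OF sL that])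
  have dp: "(p has_vector_derivative p1 t) (at t within {0..T})" if "t \<in> {0..T}" for t
    unfolding p1_def tder_nth by (rule I.smooth_has_deriv[OF sp that])
  have sk: "L1 t ** transpose (\<Lambda> t) + \<Lambda> t ** transpose (L1 t) = 0" if "t \<in> {0..T}" for t
    by (rule skew_deriv[OF Tpos dL rot that])
  have dd: "d t \<bullet> d t = 1" if "t \<in> {0..T}" for t
    unfolding d_eq using dd1[OF rot[rule_format, OF that] onb(3)] by simp
  have par: "p t \<bullet> d t = c * (w t \<bullet> d t)" if "t \<in> {0..T}" for t
    unfolding p_eq d_eq using par_eq[OF rot[rule_format, OF that] Jsym c] by simp
    have AD: "(action J T \<Lambda> \<theta> has_real_derivative integral {0..T} (\<lambda>t. p t \<bullet> tder T \<theta> t)) (at 0)"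
    if s\<theta>: "smooth_on {0..T} \<theta>" for \<theta>
  proof -
    have s\<theta>1: "smooth_on {0..T} (tder T \<theta>)" unfolding tder_nth by (rule I.smooth_deriv[OF s\<theta>])
    have d\<theta>: "(\<theta> has_vector_derivative tder T \<theta> t) (at t within {0..T})" if "t \<in> {0..T}" for t
      unfolding tder_nth by (rule I.smooth_has_deriv[OF s\<theta> that])
    have A: "(action J T \<Lambda> \<theta> has_real_derivative
     integral {0..T} (\<lambda>t. (1/2) * (vee (transpose (\<Lambda> t) ** (hat (tder T \<theta> t) ** \<Lambda> t)) \<bullet> (J *v vee (transpose (\<Lambda> t) ** L1 t))
        + vee (transpose (\<Lambda> t) ** L1 t) \<bullet> (J *v vee (transpose (\<Lambda> t) ** (hat (tder T \<theta> t) ** \<Lambda> t)))))) (at 0)"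
      by (rule action_deriv[OF Tpos dL cL cL1 d\<theta> I.smooth_cont[OF s\<theta>] I.smooth_cont[OF s\<theta>1]])
    have "integral {0..T} (\<lambda>t. (1/2) * (vee (transpose (\<Lambda> t) ** (hat (tder T \<theta> t) ** \<Lambda> t)) \<bullet> (J *v vee (transpose (\<Lambda> t) ** L1 t))
        + vee (transpose (\<Lambda> t) ** L1 t) \<bullet> (J *v vee (transpose (\<Lambda> t) ** (hat (tder T \<theta> t) ** \<Lambda> t)))))
      = integral {0..T} (\<lambda>t. p t \<bullet> tder T \<theta> t)"
    proof (rule integral_cong)
      fix t assume t: "t \<in> {0..T}"
      show "(1/2) * (vee (transpose (\<Lambda> t) ** (hat (tder T \<theta> t) ** \<Lambda> t)) \<bullet> (J *v vee (transpose (\<Lambda> t) ** L1 t))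
        + vee (transpose (\<Lambda> t) ** L1 t) \<bullet> (J *v vee (transpose (\<Lambda> t) ** (hat (tder T \<theta> t) ** \<Lambda> t))))
        = p t \<bullet> tder T \<theta> t"
        unfolding p_eq w_eq by (rule k1_eq[OF rot[rule_format, OF t] sk[OF t] Jsym])
    qed
    then show ?thesis using A by simp
  qed
  have IBP: "integral {0..T} (\<lambda>t. p t \<bullet> tder T \<theta> t) = - integral {0..T} (\<lambda>t. p1 t \<bullet> \<theta> t)"
    if s\<theta>: "smooth_on {0..T} \<theta>" and z: "\<theta> 0 = 0" "\<theta> T = 0" for \<theta>
  proof -
    have s\<theta>1: "smooth_on {0..T} (tder T \<theta>)" unfolding tder_nth by (rule I.smooth_deriv[OF s\<theta>])
    have d\<theta>: "(\<theta> has_vector_derivative tder T \<theta> t) (at t within {0..T})" if "t \<in> {0..T}" for t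
      unfolding tder_nth by (rule I.smooth_has_deriv[OF s\<theta> that])
    show ?thesis
      by (rule ibp[OF Tge dp d\<theta> cp cp1 I.smooth_cont[OF s\<theta>] I.smooth_cont[OF s\<theta>1] z])
  qed
    define Wd where "Wd \<longleftrightarrow> (\<forall>t\<in>{0..T}. w t \<bullet> d t = 0)"
  have ppar0: "pi_par J D3 T \<Lambda> t = 0" if "Wd" "t \<in> {0..T}" for t
    using par[OF that(2)] that unfolding Wd_def pi_par_def p_def[symmetric] d_def[symmetric] by simp
  have dppar: "tder T (pi_par J D3 T \<Lambda>) t = 0" if "Wd" "t \<in> {0..T}" for t
    by (rule vd_zero_on[OF Tpos ppar0[OF that(1)] that(2)])
  have pperp: "pi_perp J D3 T \<Lambda> t = p t" if "Wd" "t \<in> {0..T}" for t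
    using ppar0[OF that] unfolding pi_perp_def p_def[symmetric] d_def[symmetric] by simp
  have covdP: "covd D3 T \<Lambda> (pi_perp J D3 T \<Lambda>) t = P t" if "Wd" "t \<in> {0..T}" for t
  proof -
    have "tder T (pi_perp J D3 T \<Lambda>) t = p1 t"
      unfolding p1_def by (rule vd_eq_on[OF pperp[OF that(1)] that(2)])
    then show ?thesis unfolding covd_def P_def d_def by simp
  qed
  have Wd_eq: "(\<forall>t\<in>{0..T}. angvel T \<Lambda> t \<bullet> d3 D3 \<Lambda> t = 0) \<longleftrightarrow> Wd"
    unfolding Wd_def w_def d_def ..
    have part2: "\<forall>\<mu>::real \<Rightarrow> real.
      (\<forall>t\<in>{0..T}.
        covd D3 T \<Lambda> (pi_perp J D3 T \<Lambda>) t
          + pi_par J D3 T \<Lambda> t *\<^sub>R tder T (d3 D3 \<Lambda>) t = 0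
      \<and> tder T (pi_par J D3 T \<Lambda>) t + pi_perp J D3 T \<Lambda> t \<bullet> tder T (d3 D3 \<Lambda>) t + \<mu> t = 0
      \<and> angvel T \<Lambda> t \<bullet> d3 D3 \<Lambda> t = 0)
    \<longleftrightarrow>
      (\<forall>t\<in>{0..T}.
        covd D3 T \<Lambda> (pi_perp J D3 T \<Lambda>) t = 0
      \<and> pi_perp J D3 T \<Lambda> t \<bullet> tder T (d3 D3 \<Lambda>) t + \<mu> t = 0
      \<and> angvel T \<Lambda> t \<bullet> d3 D3 \<Lambda> t = 0)"
  proof (intro allI iffI)
    fix \<mu> :: "real \<Rightarrow> real"
    assume h: "\<forall>t\<in>{0..T}.
        covd D3 T \<Lambda> (pi_perp J D3 T \<Lambda>) t
          + pi_par J D3 T \<Lambda> t *\<^sub>R tder T (d3 D3 \<Lambda>) t = 0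
      \<and> tder T (pi_par J D3 T \<Lambda>) t + pi_perp J D3 T \<Lambda> t \<bullet> tder T (d3 D3 \<Lambda>) t + \<mu> t = 0
      \<and> angvel T \<Lambda> t \<bullet> d3 D3 \<Lambda> t = 0"
    then have W: Wd unfolding Wd_eq[symmetric] by blast
    show "\<forall>t\<in>{0..T}.
        covd D3 T \<Lambda> (pi_perp J D3 T \<Lambda>) t = 0
      \<and> pi_perp J D3 T \<Lambda> t \<bullet> tder T (d3 D3 \<Lambda>) t + \<mu> t = 0
      \<and> angvel T \<Lambda> t \<bullet> d3 D3 \<Lambda> t = 0"
      using h ppar0[OF W] dppar[OF W] by simp
  next
    fix \<mu> :: "real \<Rightarrow> real"
    assume h: "\<forall>t\<in>{0..T}.
        covd D3 T \<Lambda> (pi_perp J D3 T \<Lambda>) t = 0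
      \<and> pi_perp J D3 T \<Lambda> t \<bullet> tder T (d3 D3 \<Lambda>) t + \<mu> t = 0
      \<and> angvel T \<Lambda> t \<bullet> d3 D3 \<Lambda> t = 0"
    then have W: Wd unfolding Wd_eq[symmetric] by blast
    show "\<forall>t\<in>{0..T}.
        covd D3 T \<Lambda> (pi_perp J D3 T \<Lambda>) t
          + pi_par J D3 T \<Lambda> t *\<^sub>R tder T (d3 D3 \<Lambda>) t = 0
      \<and> tder T (pi_par J D3 T \<Lambda>) t + pi_perp J D3 T \<Lambda> t \<bullet> tder T (d3 D3 \<Lambda>) t + \<mu> t = 0
      \<and> angvel T \<Lambda> t \<bullet> d3 D3 \<Lambda> t = 0"
      using h ppar0[OF W] dppar[OF W] by simp
  qed
    have ii_iff: "(\<exists>\<mu>::real \<Rightarrow> real. \<forall>t\<in>{0..T}.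
        covd D3 T \<Lambda> (pi_perp J D3 T \<Lambda>) t
          + pi_par J D3 T \<Lambda> t *\<^sub>R tder T (d3 D3 \<Lambda>) t = 0
      \<and> tder T (pi_par J D3 T \<Lambda>) t + pi_perp J D3 T \<Lambda> t \<bullet> tder T (d3 D3 \<Lambda>) t + \<mu> t = 0
      \<and> angvel T \<Lambda> t \<bullet> d3 D3 \<Lambda> t = 0) \<longleftrightarrow> Wd \<and> (\<forall>t\<in>{0..T}. P t = 0)"
  proof
    assume "\<exists>\<mu>::real \<Rightarrow> real. \<forall>t\<in>{0..T}.
        covd D3 T \<Lambda> (pi_perp J D3 T \<Lambda>) t
          + pi_par J D3 T \<Lambda> t *\<^sub>R tder T (d3 D3 \<Lambda>) t = 0
      \<and> tder T (pi_par J D3 T \<Lambda>) t + pi_perp J D3 T \<Lambda> t \<bullet> tder T (d3 D3 \<Lambda>) t + \<mu> t = 0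
      \<and> angvel T \<Lambda> t \<bullet> d3 D3 \<Lambda> t = 0"
    then obtain \<mu> :: "real \<Rightarrow> real" where h: "\<forall>t\<in>{0..T}.
        covd D3 T \<Lambda> (pi_perp J D3 T \<Lambda>) t
          + pi_par J D3 T \<Lambda> t *\<^sub>R tder T (d3 D3 \<Lambda>) t = 0
      \<and> tder T (pi_par J D3 T \<Lambda>) t + pi_perp J D3 T \<Lambda> t \<bullet> tder T (d3 D3 \<Lambda>) t + \<mu> t = 0
      \<and> angvel T \<Lambda> t \<bullet> d3 D3 \<Lambda> t = 0" by blast
    then have W: Wd unfolding Wd_eq[symmetric] by blast
    have "P t = 0" if "t \<in> {0..T}" for t
      using h[rule_format, OF that] covdP[OF W that] ppar0[OF W that] by simp
    then show "Wd \<and> (\<forall>t\<in>{0..T}. P t = 0)" using W by blast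
  next
    assume h: "Wd \<and> (\<forall>t\<in>{0..T}. P t = 0)"
    then have W: Wd by blast
    show "\<exists>\<mu>::real \<Rightarrow> real. \<forall>t\<in>{0..T}.
        covd D3 T \<Lambda> (pi_perp J D3 T \<Lambda>) t
          + pi_par J D3 T \<Lambda> t *\<^sub>R tder T (d3 D3 \<Lambda>) t = 0
      \<and> tder T (pi_par J D3 T \<Lambda>) t + pi_perp J D3 T \<Lambda> t \<bullet> tder T (d3 D3 \<Lambda>) t + \<mu> t = 0
      \<and> angvel T \<Lambda> t \<bullet> d3 D3 \<Lambda> t = 0"
    proof (intro exI[of _ "\<lambda>t. - (tder T (pi_par J D3 T \<Lambda>) t + pi_perp J D3 T \<Lambda> t \<bullet> tder T (d3 D3 \<Lambda>) t)"] ballI conjI)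
      fix t assume t: "t \<in> {0..T}"
      show "covd D3 T \<Lambda> (pi_perp J D3 T \<Lambda>) t + pi_par J D3 T \<Lambda> t *\<^sub>R tder T (d3 D3 \<Lambda>) t = 0"
        using h t covdP[OF W t] ppar0[OF W t] by auto
      show "angvel T \<Lambda> t \<bullet> d3 D3 \<Lambda> t = 0" using W t unfolding Wd_eq[symmetric] by blast
    qed simp
  qed
    have i_iff: "((\<forall>t\<in>{0..T}. angvel T \<Lambda> t \<bullet> d3 D3 \<Lambda> t = 0) \<and>
      (\<exists>\<mu>::real \<Rightarrow> real. continuous_on {0..T} \<mu> \<and>
         (\<forall>\<delta>\<theta>::real \<Rightarrow> real^3. smooth_on {0..T} \<delta>\<theta> \<and> \<delta>\<theta> 0 = 0 \<and> \<delta>\<theta> T = 0 \<longrightarrow>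
            (action J T \<Lambda> \<delta>\<theta> has_real_derivative
               - integral {0..T} (\<lambda>t. \<mu> t * (\<delta>\<theta> t \<bullet> d3 D3 \<Lambda> t))) (at 0))))
     \<longleftrightarrow> Wd \<and> (\<forall>t\<in>{0..T}. P t = 0)"
  proof
    assume h: "(\<forall>t\<in>{0..T}. angvel T \<Lambda> t \<bullet> d3 D3 \<Lambda> t = 0) \<and>
      (\<exists>\<mu>::real \<Rightarrow> real. continuous_on {0..T} \<mu> \<and>
         (\<forall>\<delta>\<theta>::real \<Rightarrow> real^3. smooth_on {0..T} \<delta>\<theta> \<and> \<delta>\<theta> 0 = 0 \<and> \<delta>\<theta> T = 0 \<longrightarrow>
            (action J T \<Lambda> \<delta>\<theta> has_real_derivative
               - integral {0..T} (\<lambda>t. \<mu> t * (\<delta>\<theta> t \<bullet> d3 D3 \<Lambda> t))) (at 0)))"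
    then have W: Wd unfolding Wd_eq by blast
    obtain \<mu> :: "real \<Rightarrow> real" where H: "\<And>\<delta>\<theta>::real \<Rightarrow> real^3. smooth_on {0..T} \<delta>\<theta> \<Longrightarrow> \<delta>\<theta> 0 = 0 \<Longrightarrow> \<delta>\<theta> T = 0 \<Longrightarrow>
            (action J T \<Lambda> \<delta>\<theta> has_real_derivative
               - integral {0..T} (\<lambda>t. \<mu> t * (\<delta>\<theta> t \<bullet> d t))) (at 0)"
      using h unfolding d_def by blast
    define \<phi> where "\<phi> t = t * (T - t)" for t :: real
    define \<theta> where "\<theta> t = \<phi> t *\<^sub>R P t" for t
    have s\<phi>: "smooth_on {0..T} \<phi>"
    proof -
      have "smooth_on {0..T} (\<lambda>t::real. T + - t)"
        by (rule I.smooth_add[OF I.smooth_const I.smooth_linear[OF bounded_linear_minus[OF bounded_linear_ident] I.smooth_id]])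
      then have "smooth_on {0..T} (\<lambda>t::real. t * (T + - t))"
        by (rule I.smooth_bilinear[OF bounded_bilinear_mult I.smooth_id])
      then show ?thesis unfolding \<phi>_def by simp
    qed
    have s\<theta>: "smooth_on {0..T} \<theta>" unfolding \<theta>_def by (rule I.smooth_bilinear[OF bounded_bilinear_scaleR s\<phi> sP])
    have z: "\<theta> 0 = 0" "\<theta> T = 0" unfolding \<theta>_def \<phi>_def by simp_all
    have Pd: "P t \<bullet> d t = 0" if "t \<in> {0..T}" for t
      unfolding P_def using dd[OF that] by (simp add: inner_diff_left)
    have "integral {0..T} (\<lambda>t. p t \<bullet> tder T \<theta> t) = - integral {0..T} (\<lambda>t. \<mu> t * (\<theta> t \<bullet> d t))"
      by (rule DERIV_unique[OF AD[OF s\<theta>] H[OF s\<theta> z]])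
    also have "integral {0..T} (\<lambda>t. \<mu> t * (\<theta> t \<bullet> d t)) = integral {0..T} (\<lambda>t. 0)"
      by (rule integral_cong) (simp add: \<theta>_def Pd)
    finally have "integral {0..T} (\<lambda>t. p1 t \<bullet> \<theta> t) = 0" using IBP[OF s\<theta> z] by simp
    moreover have "p1 t \<bullet> \<theta> t = \<phi> t * (P t \<bullet> P t)" if "t \<in> {0..T}" for t
      unfolding \<theta>_def P_def using dd[OF that]
      by (simp add: inner_diff_left inner_diff_right inner_commute algebra_simps power2_eq_square)
    ultimately have I0: "integral {0..T} (\<lambda>t. \<phi> t * (P t \<bullet> P t)) = 0"
      by (metis (no_types, lifting) integral_cong)
    have cf: "continuous_on {0..T} (\<lambda>t. \<phi> t * (P t \<bullet> P t))"
      unfolding \<phi>_def by (intro continuous_intros cP)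
    have f0: "\<phi> t * (P t \<bullet> P t) = 0" if "t \<in> {0..T}" for t
    proof -
      have "integral (cbox 0 T) (\<lambda>t. \<phi> t * (P t \<bullet> P t)) = 0 \<longleftrightarrow> (\<forall>x \<in> cbox 0 T. \<phi> x * (P x \<bullet> P x) = 0)"
        by (rule integral_cbox_eq_0_iff) (use cf Tpos in \<open>auto simp: \<phi>_def\<close>)
      then show ?thesis using I0 that by simp
    qed
    have "P t = 0" if "t \<in> {0<..<T}" for t
    proof -
      have "\<phi> t > 0" using that unfolding \<phi>_def by simp
      then show ?thesis using f0[of t] that by simp
    qed
    then have "P t = 0" if "t \<in> {0..T}" for t
      using continuous_constant_on_closure[of "{0<..<T}" P 0 t] cP Tpos that by simp
    then show "Wd \<and> (\<forall>t\<in>{0..T}. P t = 0)" using W by blast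
  next
    assume h: "Wd \<and> (\<forall>t\<in>{0..T}. P t = 0)"
    then have W: Wd and P0: "\<And>t. t \<in> {0..T} \<Longrightarrow> P t = 0" by auto
    have p1d: "p1 t = (p1 t \<bullet> d t) *\<^sub>R d t" if "t \<in> {0..T}" for t
      using P0[OF that] unfolding P_def by simp
    show "(\<forall>t\<in>{0..T}. angvel T \<Lambda> t \<bullet> d3 D3 \<Lambda> t = 0) \<and>
      (\<exists>\<mu>::real \<Rightarrow> real. continuous_on {0..T} \<mu> \<and>
         (\<forall>\<delta>\<theta>::real \<Rightarrow> real^3. smooth_on {0..T} \<delta>\<theta> \<and> \<delta>\<theta> 0 = 0 \<and> \<delta>\<theta> T = 0 \<longrightarrow>
            (action J T \<Lambda> \<delta>\<theta> has_real_derivative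
               - integral {0..T} (\<lambda>t. \<mu> t * (\<delta>\<theta> t \<bullet> d3 D3 \<Lambda> t))) (at 0)))"
    proof (intro conjI exI[of _ "\<lambda>t. p1 t \<bullet> d t"] allI impI)
      show "\<forall>t\<in>{0..T}. angvel T \<Lambda> t \<bullet> d3 D3 \<Lambda> t = 0" using W unfolding Wd_eq .
      show "continuous_on {0..T} (\<lambda>t. p1 t \<bullet> d t)" by (intro continuous_intros cp1 cd)
      fix \<theta> :: "real \<Rightarrow> real^3"
      assume "smooth_on {0..T} \<theta> \<and> \<theta> 0 = 0 \<and> \<theta> T = 0"
      then have s\<theta>: "smooth_on {0..T} \<theta>" and z: "\<theta> 0 = 0" "\<theta> T = 0" by auto
      have "integral {0..T} (\<lambda>t. p t \<bullet> tder T \<theta> t) = - integral {0..T} (\<lambda>t. p1 t \<bullet> \<theta> t)"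
        by (rule IBP[OF s\<theta> z])
      also have "integral {0..T} (\<lambda>t. p1 t \<bullet> \<theta> t) = integral {0..T} (\<lambda>t. (p1 t \<bullet> d t) * (\<theta> t \<bullet> d3 D3 \<Lambda> t))"
      proof (rule integral_cong)
        fix t assume t: "t \<in> {0..T}"
        have "p1 t \<bullet> \<theta> t = ((p1 t \<bullet> d t) *\<^sub>R d t) \<bullet> \<theta> t" using p1d[OF t] by simp
        then show "p1 t \<bullet> \<theta> t = (p1 t \<bullet> d t) * (\<theta> t \<bullet> d3 D3 \<Lambda> t)"
          unfolding d_def by (simp add: inner_commute)
      qed
      finally show "(action J T \<Lambda> \<theta> has_real_derivative
               - integral {0..T} (\<lambda>t. (p1 t \<bullet> d t) * (\<theta> t \<bullet> d3 D3 \<Lambda> t))) (at 0)"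
        using AD[OF s\<theta>] by simp
    qed
  qed
  show ?thesis using i_iff ii_iff part2 by blast
qed


end
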